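(* (Fern Decomposition Lemma) Let $H$ be a multigraph and let $\mathcal{F}$ be the partition of $E(H)$ into the equivalence classes of $\sim$. Then each element of $H[\mathcal{F}]$ is a fern, every non-essential vertex of $H$ belongs to exactly one element of $H[\mathcal{F}]$, and $\bigcup_{S\in H[\mathcal{F}]}\partial S$ consists exactly of the essential vertices of $H$. Moreover, let the quotient multigraph $H/\mathcal{F}$ have vertex set $\bigcup_{S\in H[\mathcal{F}]}\partial S$ and contain one edge $uv$ for each tree fern $S\in H[\mathcal{F}]$ with $\partial S=\{u,v\}$, $u\neq v$, and one self-loop at $u$ for each cyclic fern $S\in H[\mathcal{F}]$ with $\partial S=\{u\}$. Then the feedback vertex number of $H/\mathcal{F}$ is at most that of $H$, and every vertex of $H/\mathcal{F}$ has degree at least 3 in $H/\mathcal{F}$.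
   Context: Multigraphs are undirected and may contain parallel edges and self-loops (a self-loop is a cycle; two parallel edges form a cycle); the feedback vertex number is the minimum number of vertices whose removal leaves an acyclic multigraph. An incidence is a pair $(u,e)$ with $e$ incident to $u$; a self-loop at $u$ gives two incidences; the degree of a vertex is its number of incidences. An edge is essential if it lies on a cycle, or is a bridge whose removal creates two new components each containing a cycle. A vertex is essential if it participates in at least three incidences with essential edges; otherwise non-essential. An incidence $(u,e)$ is critical if $u$ and $e$ are both essential. For edges $e,f$: $e\sim f$ iff there is a walk $u_0e_1u_1\dots e_\ell u_\ell$ with $e_1=e$, $e_\ell=f$, such that for every $i\in\{1,\dots,\ell-1\}$ the incidences $(u_i,e_i)$ and $(u_i,e_{i+1})$ are not critical. A boundaried multigraph is a multigraph with a distinguished vertex subset $\partial$ (boundary). For $F\subseteq E(H)$, $H[F]$ is the boundaried multigraph formed by the edges of $F$ and their endpoints, with boundary the vertices of $H[F]$ incident in $H$ to edges outside $F$. For a partition $\mathcal{F}$ of $E(H)$, $H[\mathcal{F}]=\{H[F]:F\in\mathcal{F}\}$ together with a single-vertex multigraph with empty boundary for each isolated vertex of $H$. A unicyclic graph is a connected multigraph with exactly one cycle. A fern is a boundaried multigraph $S$ with $|\partial S|\le 2$ such that: if $|\partial S|=2$, $S$ is a tree and both boundary vertices are leaves; if $|\partial S|=1$, $S$ is a tree or unicyclic, and in the unicyclic case the boundary vertex has degree 2 in $S$ and lies on its cycle; if $|\partial S|=0$, $S$ is a tree or unicyclic. A fern is a tree fern if it is a tree, and a cyclic fern if unicyclic.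 *)

theory Defs
  imports Main
begin

text \<open>A (finite, undirected) multigraph is given by a vertex set V, an edge set E and
an endpoint map ends; ends e is the set of endpoints of e, of size 1 (self-loop) or 2.\<close>

definition multigraph :: "'v set \<Rightarrow> 'e set \<Rightarrow> ('e \<Rightarrow> 'v set) \<Rightarrow> bool" where
  "multigraph V E ends \<longleftrightarrow> finite V \<and> finite E \<and>
     (\<forall>e\<in>E. ends e \<subseteq> V \<and> ends e \<noteq> {} \<and> card (ends e) \<le> 2)"

text \<open>Degree = number of incidences; a self-loop contributes two incidences.\<close>
definition degree :: "'e set \<Rightarrow> ('e \<Rightarrow> 'v set) \<Rightarrow> 'v \<Rightarrow> nat" where
  "degree E ends u = card {e\<in>E. u \<in> ends e} + card {e\<in>E. ends e = {u}}"

text \<open>A cycle: edges e_0..e_(l-1) (distinct), vertices v_0..v_(l-1) (distinct), l \<ge> 1,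
 with ends e_i = {v_i, v_(i+1 mod l)}. l = 1: self-loop; l = 2: two parallel edges.\<close>
definition is_cycle :: "'e set \<Rightarrow> ('e \<Rightarrow> 'v set) \<Rightarrow> 'e list \<Rightarrow> 'v list \<Rightarrow> bool" where
  "is_cycle E ends es vs \<longleftrightarrow> es \<noteq> [] \<and> length vs = length es \<and> distinct es \<and> distinct vs \<and>
     set es \<subseteq> E \<and>
     (\<forall>i<length es. ends (es ! i) = {vs ! i, vs ! ((i + 1) mod length es)})"

definition acyclic_mg :: "'e set \<Rightarrow> ('e \<Rightarrow> 'v set) \<Rightarrow> bool" where
  "acyclic_mg E ends \<longleftrightarrow> \<not> (\<exists>es vs. is_cycle E ends es vs)"

text \<open>Edge sets of cycles (a cycle, as a subgraph, is determined by its edge set).\<close>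
definition cycle_edge_sets :: "'e set \<Rightarrow> ('e \<Rightarrow> 'v set) \<Rightarrow> 'e set set" where
  "cycle_edge_sets E ends = {set es | es vs. is_cycle E ends es vs}"

definition reach :: "'e set \<Rightarrow> ('e \<Rightarrow> 'v set) \<Rightarrow> 'v \<Rightarrow> 'v \<Rightarrow> bool" where
  "reach E ends = (\<lambda>x y. \<exists>e\<in>E. ends e = {x, y})\<^sup>*\<^sup>*"

definition connected_mg :: "'v set \<Rightarrow> 'e set \<Rightarrow> ('e \<Rightarrow> 'v set) \<Rightarrow> bool" where
  "connected_mg V E ends \<longleftrightarrow> V \<noteq> {} \<and> (\<forall>x\<in>V. \<forall>y\<in>V. reach E ends x y)"

definition fvn :: "'v set \<Rightarrow> 'e set \<Rightarrow> ('e \<Rightarrow> 'v set) \<Rightarrow> nat" where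
  "fvn V E ends = Min (card ` {X. X \<subseteq> V \<and> acyclic_mg {e\<in>E. ends e \<inter> X = {}} ends})"

definition essential_edge :: "'e set \<Rightarrow> ('e \<Rightarrow> 'v set) \<Rightarrow> 'e \<Rightarrow> bool" where
  "essential_edge E ends e \<longleftrightarrow> e \<in> E \<and>
     ((\<exists>es vs. is_cycle E ends es vs \<and> e \<in> set es) \<or>
      (\<exists>u v. u \<noteq> v \<and> ends e = {u, v} \<and> \<not> reach (E - {e}) ends u v \<and>
         (\<exists>es vs. is_cycle (E - {e}) ends es vs \<and> reach (E - {e}) ends u (hd vs)) \<and>
         (\<exists>es vs. is_cycle (E - {e}) ends es vs \<and> reach (E - {e}) ends v (hd vs))))"

definition essential_vertex :: "'v set \<Rightarrow> 'e set \<Rightarrow> ('e \<Rightarrow> 'v set) \<Rightarrow> 'v \<Rightarrow> bool" where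
  "essential_vertex V E ends u \<longleftrightarrow> u \<in> V \<and>
     card {e\<in>E. essential_edge E ends e \<and> u \<in> ends e}
     + card {e\<in>E. essential_edge E ends e \<and> ends e = {u}} \<ge> 3"

definition critical :: "'v set \<Rightarrow> 'e set \<Rightarrow> ('e \<Rightarrow> 'v set) \<Rightarrow> 'v \<Rightarrow> 'e \<Rightarrow> bool" where
  "critical V E ends u e \<longleftrightarrow> u \<in> ends e \<and> essential_vertex V E ends u \<and> essential_edge E ends e"

definition fern_sim :: "'v set \<Rightarrow> 'e set \<Rightarrow> ('e \<Rightarrow> 'v set) \<Rightarrow> 'e \<Rightarrow> 'e \<Rightarrow> bool" where
  "fern_sim V E ends e f \<longleftrightarrow> (\<exists>es vs. es \<noteq> [] \<and> length vs = length es + 1 \<and> set es \<subseteq> E \<and>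
     hd es = e \<and> last es = f \<and>
     (\<forall>i<length es. ends (es ! i) = {vs ! i, vs ! Suc i}) \<and>
     (\<forall>i. 0 < i \<and> i < length es \<longrightarrow>
        \<not> critical V E ends (vs ! i) (es ! (i - 1)) \<and> \<not> critical V E ends (vs ! i) (es ! i)))"

definition sim_classes :: "'v set \<Rightarrow> 'e set \<Rightarrow> ('e \<Rightarrow> 'v set) \<Rightarrow> 'e set set" where
  "sim_classes V E ends = (\<lambda>e. {f\<in>E. fern_sim V E ends e f}) ` E"

text \<open>Boundaried multigraphs: (vertices, edges, boundary), endpoints inherited from ends.\<close>
type_synonym ('v, 'e) bmg = "'v set \<times> 'e set \<times> 'v set"

definition bverts :: "('v, 'e) bmg \<Rightarrow> 'v set" where "bverts S = fst S"
definition bedges :: "('v, 'e) bmg \<Rightarrow> 'e set" where "bedges S = fst (snd S)"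
definition bdry :: "('v, 'e) bmg \<Rightarrow> 'v set" where "bdry S = snd (snd S)"

definition induced_bmg :: "'e set \<Rightarrow> ('e \<Rightarrow> 'v set) \<Rightarrow> 'e set \<Rightarrow> ('v, 'e) bmg" where
  "induced_bmg E ends F = (\<Union>(ends ` F), F, {v \<in> \<Union>(ends ` F). \<exists>e\<in>E - F. v \<in> ends e})"

definition induced_partition :: "'v set \<Rightarrow> 'e set \<Rightarrow> ('e \<Rightarrow> 'v set) \<Rightarrow> 'e set set \<Rightarrow> ('v, 'e) bmg set" where
  "induced_partition V E ends \<F> = induced_bmg E ends ` \<F> \<union>
     {({v}, {}, {}) | v. v \<in> V \<and> (\<forall>e\<in>E. v \<notin> ends e)}"

definition is_tree :: "('e \<Rightarrow> 'v set) \<Rightarrow> ('v, 'e) bmg \<Rightarrow> bool" where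
  "is_tree ends S \<longleftrightarrow> connected_mg (bverts S) (bedges S) ends \<and> acyclic_mg (bedges S) ends"

definition is_unicyclic :: "('e \<Rightarrow> 'v set) \<Rightarrow> ('v, 'e) bmg \<Rightarrow> bool" where
  "is_unicyclic ends S \<longleftrightarrow> connected_mg (bverts S) (bedges S) ends \<and>
     card (cycle_edge_sets (bedges S) ends) = 1"

definition is_fern :: "('e \<Rightarrow> 'v set) \<Rightarrow> ('v, 'e) bmg \<Rightarrow> bool" where
  "is_fern ends S \<longleftrightarrow> card (bdry S) \<le> 2 \<and>
     (card (bdry S) = 2 \<longrightarrow> is_tree ends S \<and> (\<forall>b\<in>bdry S. degree (bedges S) ends b = 1)) \<and>
     (card (bdry S) = 1 \<longrightarrow> is_tree ends S \<or>
        (is_unicyclic ends S \<and> (\<forall>b\<in>bdry S. degree (bedges S) ends b = 2 \<and>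
           (\<exists>es vs. is_cycle (bedges S) ends es vs \<and> b \<in> set vs)))) \<and>
     (card (bdry S) = 0 \<longrightarrow> is_tree ends S \<or> is_unicyclic ends S)"

text \<open>Quotient multigraph H/\<F>: edges are the elements S of H[\<F>] that are tree ferns with two
boundary vertices or cyclic ferns with one boundary vertex; the endpoints of S are \<partial>S.\<close>
definition quot_verts :: "('v, 'e) bmg set \<Rightarrow> 'v set" where
  "quot_verts HF = \<Union>(bdry ` HF)"

definition quot_edges :: "('e \<Rightarrow> 'v set) \<Rightarrow> ('v, 'e) bmg set \<Rightarrow> ('v, 'e) bmg set" where
  "quot_edges ends HF = {S \<in> HF. (is_fern ends S \<and> is_tree ends S \<and> card (bdry S) = 2) \<or>
                                   (is_fern ends S \<and> is_unicyclic ends S \<and> card (bdry S) = 1)}"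

end

theory Submission
  imports Defs
begin


lemma reach_refl[simp]: "reach F ends x x" by (simp add: reach_def)

lemma reach_edge: "e \<in> F \<Longrightarrow> ends e = {x,y} \<Longrightarrow> reach F ends x y"
  unfolding reach_def by (rule r_into_rtranclp) auto

lemma reach_trans: "reach F ends x y \<Longrightarrow> reach F ends y z \<Longrightarrow> reach F ends x z"
  unfolding reach_def by (rule rtranclp_trans)

lemma reach_sym: "reach F ends x y \<Longrightarrow> reach F ends y x"
  unfolding reach_def
proof (induction rule: rtranclp_induct)
  case base then show ?case by simp
next
  case (step y z)
  then obtain e where "e\<in>F" "ends e = {y,z}" by auto
  then have "(\<lambda>x y. \<exists>e\<in>F. ends e = {x, y})\<^sup>*\<^sup>* z y" by (intro r_into_rtranclp) (auto simp: insert_commute)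
  with step show ?case by (meson rtranclp_trans)
qed

lemma reach_mono: "reach F ends x y \<Longrightarrow> F \<subseteq> G \<Longrightarrow> reach G ends x y"
  unfolding reach_def
  by (erule rtranclp_mono[THEN predicate2D, rotated]) auto

lemma reach_in_edge: "e \<in> F \<Longrightarrow> ends e = {u,v} \<Longrightarrow> x \<in> ends e \<Longrightarrow> y \<in> ends e \<Longrightarrow> reach F ends x y"
  by (auto intro: reach_edge reach_sym)

lemma two_elem: "finite A \<Longrightarrow> A \<noteq> {} \<Longrightarrow> card A \<le> 2 \<Longrightarrow> \<exists>u v. A = {u,v}"
proof -
  assume a: "finite A" "A \<noteq> {}" "card A \<le> 2"
  then have "0 < card A" by (simp add: card_gt_0_iff)
  then have "card A = 1 \<or> card A = 2" using a(3) by linarith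
  then show ?thesis
  proof
    assume "card A = 1" then obtain x where "A = {x}" by (auto simp: card_1_singleton_iff)
    then show ?thesis by blast
  next
    assume "card A = 2" then obtain x y where "A = {x,y}" by (auto simp: card_2_iff)
    then show ?thesis by blast
  qed
qed

lemma reach_avoid:
  assumes "reach F ends q y" "\<not> reach F ends q a" "g \<in> F" "a \<in> ends g" "ends g = {u,v}"
  shows "reach (F - {g}) ends q y"
  using assms(1) unfolding reach_def
proof (induction rule: rtranclp_induct)
  case base then show ?case by simp
next
  case (step x z)
  then obtain e where e: "e\<in>F" "ends e = {x,z}" by auto
  have rx: "reach F ends q x" using step(1) unfolding reach_def .
  show ?case
  proof (cases "e = g")
    case True
    then have "reach F ends x a" using reach_in_edge[of g F ends u v x a] assms(3,4,5) e by auto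
    with rx assms(2) show ?thesis by (meson reach_trans)
  next
    case False
    have "reach (F - {g}) ends x z" using e False by (intro reach_edge) auto
    with step.IH show ?thesis unfolding reach_def by (rule rtranclp_trans)
  qed
qed

lemma reach_leaf:
  assumes "reach F ends a b" "a \<noteq> u" "b \<noteq> u" "\<forall>f\<in>F. u \<in> ends f \<longrightarrow> f = g"
    "ends g = {u, y}" "y \<noteq> u"
  shows "reach (F - {g}) ends a b"
proof -
  have "(x \<noteq> u \<and> reach (F - {g}) ends a x) \<or> (x = u \<and> reach (F - {g}) ends a y)"
    if "reach F ends a x" for x
    using that unfolding reach_def
  proof (induction rule: rtranclp_induct)
    case base then show ?case using assms(2) by (simp add: reach_def)
  next
    case (step x z)
    then obtain e where e: "e\<in>F" "ends e = {x,z}" by auto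
    show ?case
    proof (cases "e = g")
      case True
      then have xz: "{x,z} = {u,y}" using e assms(5) by simp
      show ?thesis
      proof (cases "x = u")
        case True
        then have "z = y" using xz assms(6) by (metis doubleton_eq_iff)
        then show ?thesis using step True assms(6) by (auto simp: reach_def)
      next
        case False
        then have "x = y" "z = u" using xz by (auto simp: doubleton_eq_iff)
        then show ?thesis using step False by (auto simp: reach_def)
      qed
    next
      case False
      then have "x \<noteq> u" "z \<noteq> u" using e assms(4) by auto
      moreover have "reach (F - {g}) ends x z" using e False by (intro reach_edge) auto
      ultimately show ?thesis using step by (auto simp: reach_def intro: rtranclp_trans)
    qed
  qed
  from this[OF assms(1)] assms(3) show ?thesis by auto
qed

lemma cycle_sub: "is_cycle F ends es vs \<Longrightarrow> set es \<subseteq> F"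
  by (simp add: is_cycle_def)

lemma cycle_mono: "is_cycle F ends es vs \<Longrightarrow> set es \<subseteq> G \<Longrightarrow> is_cycle G ends es vs"
  by (simp add: is_cycle_def)

lemma cycle_ends_in: "is_cycle F ends es vs \<Longrightarrow> f \<in> set es \<Longrightarrow> ends f \<subseteq> set vs"
proof -
  assume c: "is_cycle F ends es vs" "f \<in> set es"
  then obtain i where i: "i < length es" "f = es ! i" by (metis in_set_conv_nth)
  then have "ends f = {vs!i, vs!((i+1) mod length es)}" using c by (simp add: is_cycle_def)
  moreover have "(i+1) mod length es < length vs" using c i by (simp add: is_cycle_def)
  ultimately show ?thesis using c i by (auto simp: is_cycle_def)
qed

lemma cycle_reach0: "is_cycle F ends es vs \<Longrightarrow> i < length vs \<Longrightarrow> reach (set es) ends (vs!0) (vs!i)"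
proof (induction i)
  case 0 then show ?case by simp
next
  case (Suc i)
  then have li: "i < length es" "Suc i < length es" by (auto simp: is_cycle_def)
  then have "ends (es!i) = {vs!i, vs!(Suc i)}" using Suc.prems by (auto simp: is_cycle_def)
  then have "reach (set es) ends (vs!i) (vs!Suc i)" using li by (intro reach_edge) auto
  with Suc show ?case by (meson Suc_lessD reach_trans)
qed

lemma cycle_reach: "is_cycle F ends es vs \<Longrightarrow> x \<in> set vs \<Longrightarrow> y \<in> set vs \<Longrightarrow> reach (set es) ends x y"
  by (metis cycle_reach0 in_set_conv_nth reach_sym reach_trans)

lemma cycle_hd: "is_cycle F ends es vs \<Longrightarrow> hd vs \<in> set vs"
  by (metis is_cycle_def hd_in_set length_0_conv)

lemma degree_mono: "F \<subseteq> G \<Longrightarrow> finite G \<Longrightarrow> degree F ends x \<le> degree G ends x"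
  unfolding degree_def
  by (intro add_mono card_mono) (auto intro: finite_subset)

lemma cycle_deg: "is_cycle F ends es vs \<Longrightarrow> x \<in> set vs \<Longrightarrow> degree (set es) ends x \<ge> 2"
proof -
  assume c: "is_cycle F ends es vs" "x \<in> set vs"
  then obtain i where i: "i < length vs" "x = vs ! i" by (metis in_set_conv_nth)
  define k where "k = length es"
  have k: "k = length vs" "k > 0" using c by (auto simp: is_cycle_def k_def)
  show ?thesis
  proof (cases "k = 1")
    case True
    then have "ends (es!0) = {vs!0}" using c k by (auto simp: is_cycle_def k_def)
    moreover have "i = 0" using i k True by auto
    moreover have "es!0 \<in> set es" using k by (simp add: k_def)
    ultimately have m: "es!0 \<in> {e\<in>set es. x \<in> ends e}" "es!0 \<in> {e\<in>set es. ends e = {x}}" using i by auto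
    have "0 < card {e\<in>set es. x \<in> ends e}" by (subst card_gt_0_iff) (use m in auto)
    moreover have "0 < card {e\<in>set es. ends e = {x}}" by (subst card_gt_0_iff) (use m in auto)
    ultimately show ?thesis by (simp add: degree_def)
  next
    case False
    define j where "j = (if i = 0 then k - 1 else i - 1)"
    have j: "j < k" "(j + 1) mod k = i" using k(2) i False unfolding j_def k(1)
      by auto
    have "j \<noteq> i" unfolding j_def using k False i by auto
    then have ne: "es!j \<noteq> es!i" using c j i k by (auto simp: is_cycle_def nth_eq_iff_index_eq k_def)
    have "x \<in> ends (es!i)" "x \<in> ends (es!j)" using c i j k by (auto simp: is_cycle_def k_def)
    then have "{es!i, es!j} \<subseteq> {e\<in>set es. x \<in> ends e}" using i j k by (auto simp: k_def)
    then have "card {es!i, es!j} \<le> card {e\<in>set es. x \<in> ends e}" by (intro card_mono) auto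
    then show ?thesis using ne by (simp add: degree_def)
  qed
qed

definition path :: "('e \<Rightarrow> 'v set) \<Rightarrow> 'e set \<Rightarrow> 'e list \<Rightarrow> 'v list \<Rightarrow> bool" where
  "path ends F es vs \<longleftrightarrow> length vs = Suc (length es) \<and> distinct vs \<and> set es \<subseteq> F \<and>
     (\<forall>i<length es. ends (es!i) = {vs!i, vs!Suc i})"

lemma path_distinct_edges: assumes "path ends F es vs" shows "distinct es"
  unfolding distinct_conv_nth
proof (intro allI impI)
  fix i j assume a': "i < length es" "j < length es" "i \<noteq> j"
  have a: "length vs = Suc (length es) \<and> distinct vs \<and> set es \<subseteq> F \<and>
     (\<forall>i<length es. ends (es ! i) = {vs ! i, vs ! Suc i})" "i < length es" "j < length es" "i \<noteq> j"
    using assms a' by (auto simp: path_def)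
  show "es!i \<noteq> es!j"
  proof
    assume "es!i = es!j"
    then have "{vs ! i, vs ! Suc i} = {vs ! j, vs ! Suc j}" using a by metis
    moreover have "vs!i \<noteq> vs!j" "vs!i \<noteq> vs!Suc j \<or> vs ! Suc i \<noteq> vs!j" using a
      by (auto simp: nth_eq_iff_index_eq)
    ultimately show False by (auto simp: doubleton_eq_iff)
  qed
qed

lemma reach_path: "reach F ends a b \<Longrightarrow> \<exists>es vs. path ends F es vs \<and> hd vs = a \<and> last vs = b"
  unfolding reach_def
proof (induction rule: rtranclp_induct)
  case base
  then show ?case by (intro exI[of _ "[]"] exI[of _ "[a]"]) (auto simp: path_def)
next
  case (step x z)
  then obtain es vs where p: "path ends F es vs" "hd vs = a" "last vs = x" by auto
  obtain g where g: "g \<in> F" "ends g = {x,z}" using step by auto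
  show ?case
  proof (cases "z \<in> set vs")
    case True
    then obtain j where j: "j < length vs" "vs!j = z" by (metis in_set_conv_nth)
    have "path ends F (take j es) (take (Suc j) vs)" using p j
      by (auto simp: path_def dest: in_set_takeD)
    moreover have "hd (take (Suc j) vs) = a" using p j by (metis hd_take zero_less_Suc)
    moreover have "last (take (Suc j) vs) = z" using j by (simp add: take_Suc_conv_app_nth)
    ultimately show ?thesis by blast
  next
    case False
    have ne: "vs \<noteq> []" using p by (auto simp: path_def)
    have "path ends F (es @ [g]) (vs @ [z])"
      unfolding path_def
    proof (intro conjI allI impI)
      show "length (vs @ [z]) = Suc (length (es @ [g]))" using p by (simp add: path_def)
      show "distinct (vs @ [z])" using p False by (simp add: path_def)
      show "set (es @ [g]) \<subseteq> F" using p g by (simp add: path_def)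
      fix i assume i: "i < length (es @ [g])"
      show "ends ((es @ [g]) ! i) = {(vs @ [z]) ! i, (vs @ [z]) ! Suc i}"
      proof (cases "i < length es")
        case True then show ?thesis using p by (simp add: path_def nth_append)
      next
        case False
        then have "i = length es" using i by simp
        moreover have "vs ! length es = x" using p ne by (simp add: path_def last_conv_nth)
        ultimately show ?thesis using g p by (simp add: path_def nth_append)
      qed
    qed
    moreover have "hd (vs @ [z]) = a" using p ne by simp
    ultimately show ?thesis by (metis last_snoc)
  qed
qed

lemma path_drop: "path ends F es vs \<Longrightarrow> i \<le> length es \<Longrightarrow> path ends F (drop i es) (drop i vs)"
  by (auto simp: path_def add.commute dest: in_set_dropD)

lemma path_reach: "path ends F es vs \<Longrightarrow> reach (set es) ends (hd vs) (last vs)"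
proof -
  assume p: "path ends F es vs"
  have "\<forall>j < length vs. reach (set es) ends (vs!0) (vs!j)"
  proof (intro allI impI)
    fix j assume "j < length vs"
    then show "reach (set es) ends (vs!0) (vs!j)"
    proof (induction j)
      case 0 then show ?case by simp
    next
      case (Suc j)
      then have "j < length es" using p by (simp add: path_def)
      then have "reach (set es) ends (vs!j) (vs!Suc j)" using p by (intro reach_edge[of "es!j"]) (auto simp: path_def)
      with Suc show ?case by (meson Suc_lessD reach_trans)
    qed
  qed
  moreover have "vs \<noteq> []" using p by (auto simp: path_def)
  ultimately show ?thesis by (simp add: hd_conv_nth last_conv_nth)
qed

lemma path_cycle:
  assumes "path ends F es vs" "e \<in> F" "e \<notin> set es" "ends e = {last vs, hd vs}"
  shows "is_cycle F ends (es @ [e]) vs"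
  unfolding is_cycle_def
proof (intro conjI allI impI)
  have d: "distinct es" using path_distinct_edges[OF assms(1)] .
  have ne: "vs \<noteq> []" using assms(1) by (auto simp: path_def)
  show "es @ [e] \<noteq> []" by simp
  show "length vs = length (es @ [e])" using assms(1) by (simp add: path_def)
  show "distinct (es @ [e])" using d assms(3) by simp
  show "distinct vs" using assms(1) by (simp add: path_def)
  show "set (es @ [e]) \<subseteq> F" using assms(1,2) by (simp add: path_def)
  fix i assume i: "i < length (es @ [e])"
  show "ends ((es @ [e]) ! i) = {vs ! i, vs ! ((i + 1) mod length (es @ [e]))}"
  proof (cases "i < length es")
    case True then show ?thesis using assms(1) by (simp add: path_def nth_append)
  next
    case False
    then have "i = length es" using i by simp
    moreover have "vs ! length es = last vs" using assms(1) ne by (simp add: path_def last_conv_nth)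
    ultimately show ?thesis using assms(4) ne by (simp add: nth_append hd_conv_nth insert_commute)
  qed
qed

lemma reach_cycle:
  assumes "e \<in> F" "ends e = {a,b}" "reach (F - {e}) ends a b"
  shows "\<exists>es vs. is_cycle F ends es vs \<and> e \<in> set es"
proof -
  obtain es vs where p: "path ends (F - {e}) es vs" "hd vs = a" "last vs = b"
    using reach_path[OF assms(3)] by blast
  then have p': "path ends F es vs" by (auto simp: path_def)
  have "e \<notin> set es" using p by (auto simp: path_def)
  then have "is_cycle F ends (es @ [e]) vs" using path_cycle[OF p'] assms p by (simp add: insert_commute)
  then show ?thesis by auto
qed


lemma card_filter: "finite F \<Longrightarrow> card {e\<in>F. P e} = (\<Sum>e\<in>F. if P e then 1 else 0)"
  by (simp add: sum.If_cases Int_def)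

lemma degree_sum: "finite F \<Longrightarrow> degree F ends w =
   (\<Sum>e\<in>F. (if w \<in> ends e then 1 else 0) + (if ends e = {w} then 1 else 0))"
  unfolding degree_def sum.distrib by (simp only: card_filter)


lemma handshake:
  assumes fin: "finite F" "finite W" and sub: "\<forall>e\<in>F. ends e \<subseteq> W \<and> (\<exists>u v. ends e = {u,v})"
  shows "(\<Sum>w\<in>W. degree F ends w) = 2 * card F"
proof -
  have each: "(\<Sum>w\<in>W. (if w \<in> ends e then 1 else 0) + (if ends e = {w} then 1 else 0)) = (2::nat)"
    if "e \<in> F" for e
  proof -
    have A: "ends e \<subseteq> W" "\<exists>u v. ends e = {u,v}" using sub that by simp_all
    then obtain u v where uv: "ends e = {u,v}" by blast
    have W: "u \<in> W" "v \<in> W" using A uv by auto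
    have s1: "(\<Sum>w\<in>W. (if w \<in> ends e then 1 else 0)) = card {w\<in>W. w \<in> ends e}"
      using fin by (simp only: card_filter)
    have s2: "(\<Sum>w\<in>W. (if ends e = {w} then 1 else 0)) = card {w\<in>W. ends e = {w}}"
      using fin by (simp only: card_filter)
    have c1: "{w\<in>W. w \<in> ends e} = {u,v}" using W uv by auto
    show ?thesis
    proof (cases "u = v")
      case True
      then have "{w\<in>W. ends e = {w}} = {u}" using W uv by auto
      then show ?thesis using s1 s2 c1 True by (simp add: sum.distrib)
    next
      case False
      then have "{w\<in>W. ends e = {w}} = {}" using uv by (auto simp: doubleton_eq_iff)
      then show ?thesis using s1 s2 c1 False by (simp add: sum.distrib)
    qed
  qed
  have "(\<Sum>w\<in>W. degree F ends w) =
     (\<Sum>w\<in>W. \<Sum>e\<in>F. (if w \<in> ends e then 1 else 0) + (if ends e = {w} then 1 else 0))"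
    using fin by (simp add: degree_sum)
  also have "\<dots> = (\<Sum>e\<in>F. \<Sum>w\<in>W. (if w \<in> ends e then 1 else 0) + (if ends e = {w} then 1 else 0))"
    by (rule sum.swap)
  also have "\<dots> = (\<Sum>e\<in>F. 2)" using each by (intro sum.cong) auto
  finally show ?thesis by simp
qed

lemma conn_card:
  fixes ends :: "'e \<Rightarrow> 'w set"
  assumes fin: "finite F" "finite W" and sub: "\<forall>e\<in>F. ends e \<subseteq> W \<and> (\<exists>u v. ends e = {u,v})"
    and r: "r \<in> W" and conn: "\<forall>w\<in>W. reach F ends r w"
  shows "card W \<le> card F + 1 \<and> (card W \<le> card F \<longrightarrow> (\<exists>es vs. is_cycle F ends es vs))"
proof -
  define P where "P = (\<lambda>x y. \<exists>e\<in>F. ends e = {x, y})"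
  define dist where "dist w = (LEAST n. (P ^^ n) r w)" for w
  have ex: "\<exists>n. (P ^^ n) r w" if "w \<in> W" for w
    using conn that unfolding reach_def P_def by (simp add: rtranclp_power)
  have dpow: "(P ^^ dist w) r w" if "w \<in> W" for w
    using ex[OF that] unfolding dist_def by (rule LeastI_ex)
  have dmin: "dist w \<le> n" if "(P ^^ n) r w" for w n
    unfolding dist_def using that by (rule Least_le)
  have par: "\<exists>e. e \<in> F \<and> (\<exists>u. ends e = {u, w} \<and> dist u < dist w)" if "w \<in> W" "w \<noteq> r" for w
  proof -
    have "dist w \<noteq> 0" using dpow[OF that(1)] that(2) by (metis relpowp.simps(1) eq_OO)
    then obtain m where m: "dist w = Suc m" by (cases "dist w") auto
    then have "(P ^^ m OO P) r w" using dpow[OF that(1)] by simp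
    then obtain u where u: "(P ^^ m) r u" "P u w" by blast
    have "dist u \<le> m" using dmin[OF u(1)] .
    then have "dist u < dist w" using m by simp
    then show ?thesis using u(2) unfolding P_def by blast
  qed
  define parent where "parent w = (SOME e. e \<in> F \<and> (\<exists>u. ends e = {u, w} \<and> dist u < dist w))" for w
  have parent: "parent w \<in> F \<and> (\<exists>u. ends (parent w) = {u, w} \<and> dist u < dist w)" if "w \<in> W" "w \<noteq> r" for w
    unfolding parent_def using par[OF that] by (rule someI_ex)
  have inj: "inj_on parent (W - {r})"
  proof (rule inj_onI)
    fix w1 w2 assume a: "w1 \<in> W - {r}" "w2 \<in> W - {r}" "parent w1 = parent w2"
    obtain u1 where u1: "ends (parent w1) = {u1, w1}" "dist u1 < dist w1" using parent a by blast
    obtain u2 where u2: "ends (parent w2) = {u2, w2}" "dist u2 < dist w2" using parent a by blast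
    have "{u1, w1} = {u2, w2}" using u1 u2 a by simp
    then show "w1 = w2" using u1 u2 by (auto simp: doubleton_eq_iff)
  qed
  have img: "parent ` (W - {r}) \<subseteq> F" using parent by auto
  have cW: "card W = card (W - {r}) + 1" using fin r by (metis Suc_eq_plus1 card_Suc_Diff1)
  have c1: "card (W - {r}) = card (parent ` (W - {r}))" using inj by (simp add: card_image)
  have c2: "card (parent ` (W - {r})) \<le> card F" using img fin by (intro card_mono)
  have part2: "\<exists>es vs. is_cycle F ends es vs" if le: "card W \<le> card F"
  proof -
    have "parent ` (W - {r}) \<noteq> F" using le cW c1 by auto
    then obtain g where g: "g \<in> F" "g \<notin> parent ` (W - {r})" using img by blast
    have rch: "\<forall>w\<in>W. dist w = n \<longrightarrow> reach (F - {g}) ends r w" for n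
    proof (induction n rule: less_induct)
      case (less n)
      show ?case
      proof (intro ballI impI)
        fix w assume w: "w \<in> W" "dist w = n"
        show "reach (F - {g}) ends r w"
        proof (cases "w = r")
          case True then show ?thesis by simp
        next
          case False
          obtain u where u: "ends (parent w) = {u, w}" "dist u < dist w" using parent w False by blast
          have pw: "parent w \<in> F - {g}" using parent w False g by auto
          have "ends (parent w) \<subseteq> W" using sub pw by simp
          then have "u \<in> W" using u by auto
          then have "reach (F - {g}) ends r u" using less u w by auto
          moreover have "reach (F - {g}) ends u w" using pw u by (intro reach_edge)
          ultimately show ?thesis by (rule reach_trans)
        qed
      qed
    qed
    have A: "ends g \<subseteq> W" "\<exists>u v. ends g = {u,v}" using sub g by simp_all
    then obtain a b where ab: "ends g = {a,b}" by blast
    have "a \<in> W" "b \<in> W" using A ab by auto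
    then have "reach (F - {g}) ends r a" "reach (F - {g}) ends r b" using rch by auto
    then have "reach (F - {g}) ends a b" by (meson reach_sym reach_trans)
    then show ?thesis using reach_cycle[of g F ends a b] g(1) ab by blast
  qed
  show ?thesis using cW c1 c2 part2 by auto
qed


lemma cycle_two:
  assumes c: "is_cycle F ends es vs" "x \<in> set vs" "length es \<noteq> 1"
  shows "card {e\<in>set es. x \<in> ends e} \<ge> 2"
proof -
  obtain i where i: "i < length vs" "x = vs ! i" using c by (metis in_set_conv_nth)
  define k where "k = length es"
  have k: "k = length vs" "k > 0" using c by (auto simp: is_cycle_def k_def)
  define j where "j = (if i = 0 then k - 1 else i - 1)"
  have j: "j < k" "(j + 1) mod k = i" using k(2) i c(3) unfolding j_def k(1) k_def[symmetric]
    by auto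
  have "j \<noteq> i" unfolding j_def using k c(3) i unfolding k_def by auto
  then have ne: "es!j \<noteq> es!i" using c j i k by (auto simp: is_cycle_def nth_eq_iff_index_eq k_def)
  have "x \<in> ends (es!i)" "x \<in> ends (es!j)" using c i j k by (auto simp: is_cycle_def k_def)
  then have "{es!i, es!j} \<subseteq> {e\<in>set es. x \<in> ends e}" using i j k by (auto simp: k_def)
  then have "card {es!i, es!j} \<le> card {e\<in>set es. x \<in> ends e}" by (intro card_mono) auto
  then show ?thesis using ne by simp
qed

lemma cycle_vertex_edge:
  assumes c: "is_cycle F ends es vs" "x \<in> set vs"
  shows "\<exists>e\<in>set es. x \<in> ends e"
proof -
  obtain i where i: "i < length vs" "x = vs ! i" using c by (metis in_set_conv_nth)
  then have "i < length es" "x \<in> ends (es!i)" using c by (auto simp: is_cycle_def)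
  then show ?thesis by auto
qed

locale mg =
  fixes V :: "'v set" and E :: "'e set" and ends :: "'e \<Rightarrow> 'v set"
  assumes mg: "multigraph V E ends"
begin

lemma finV: "finite V" and finE: "finite E" using mg by (auto simp: multigraph_def)

lemma ends_sub: "e \<in> E \<Longrightarrow> ends e \<subseteq> V" using mg by (auto simp: multigraph_def)

lemma ends_uv: "e \<in> E \<Longrightarrow> \<exists>u v. ends e = {u,v}"
proof -
  assume e: "e \<in> E"
  then have "ends e \<subseteq> V" "ends e \<noteq> {}" "card (ends e) \<le> 2" using mg by (auto simp: multigraph_def)
  moreover have "finite (ends e)" using calculation(1) finV by (rule finite_subset)
  ultimately show ?thesis using two_elem by blast
qed

lemma ends_uv_all: "\<forall>e\<in>F. \<exists>u v. ends e = {u,v}" if "F \<subseteq> E" using ends_uv that by blast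

definition oncyc :: "'e \<Rightarrow> bool" where
  "oncyc g \<longleftrightarrow> (\<exists>es vs. is_cycle E ends es vs \<and> g \<in> set es)"

definition cycfrom :: "'e set \<Rightarrow> 'v \<Rightarrow> bool" where
  "cycfrom F x \<longleftrightarrow> (\<exists>es vs. is_cycle F ends es vs \<and> reach F ends x (hd vs))"

abbreviation ess :: "'e \<Rightarrow> bool" where "ess e \<equiv> essential_edge E ends e"
abbreviation essv :: "'v \<Rightarrow> bool" where "essv v \<equiv> essential_vertex V E ends v"

definition dg :: "'v \<Rightarrow> nat" where
  "dg x = card {e\<in>E. ess e \<and> x \<in> ends e} + card {e\<in>E. ess e \<and> ends e = {x}}"

lemma essv_iff: "essv v \<longleftrightarrow> v \<in> V \<and> dg v \<ge> 3"
  by (simp add: essential_vertex_def dg_def)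

lemma ess_iff: "ess e \<longleftrightarrow> e \<in> E \<and> (oncyc e \<or> (\<exists>u v. u \<noteq> v \<and> ends e = {u,v} \<and> \<not> reach (E - {e}) ends u v
   \<and> cycfrom (E - {e}) u \<and> cycfrom (E - {e}) v))"
  by (simp add: essential_edge_def oncyc_def cycfrom_def)

lemma oncyc_ess: "oncyc e \<Longrightarrow> ess e"
  unfolding ess_iff using cycle_sub by (fastforce simp: oncyc_def)

lemma cycle_ess: "is_cycle F ends es vs \<Longrightarrow> F \<subseteq> E \<Longrightarrow> e \<in> set es \<Longrightarrow> ess e"
  by (meson cycle_mono cycle_sub oncyc_def oncyc_ess subset_trans)

lemma cycfrom_reach: "cycfrom F x \<Longrightarrow> reach F ends y x \<Longrightarrow> cycfrom F y"
  unfolding cycfrom_def by (meson reach_trans)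

lemma cycfrom_mono: "cycfrom F x \<Longrightarrow> F \<subseteq> G \<Longrightarrow> cycfrom G x"
  unfolding cycfrom_def by (meson cycle_mono cycle_sub reach_mono subset_trans)

lemma cycfrom_cycle: "is_cycle F ends es vs \<Longrightarrow> x \<in> set vs \<Longrightarrow> cycfrom F x"
  unfolding cycfrom_def by (meson cycle_hd cycle_reach cycle_sub reach_mono)

lemma side_cyc:
  assumes "cycfrom F q" "\<not> reach F ends q a" "g \<in> F" "a \<in> ends g" "ends g = {u,v}"
  shows "cycfrom (F - {g}) q"
proof -
  obtain es vs where c: "is_cycle F ends es vs" "reach F ends q (hd vs)" using assms(1) cycfrom_def by auto
  have r: "reach (F - {g}) ends q (hd vs)" using reach_avoid[of F ends q "hd vs" a g u v] c(2) assms(2-5) by blast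
  have "g \<notin> set es"
  proof
    assume ge: "g \<in> set es"
    have "a \<in> set vs" using cycle_ends_in[OF c(1) ge] assms(4) by blast
    then have "reach (set es) ends (hd vs) a" by (rule cycle_reach[OF c(1) cycle_hd[OF c(1)]])
    then have "reach F ends (hd vs) a" using cycle_sub[OF c(1)] by (rule reach_mono)
    with c(2) have "reach F ends q a" by (rule reach_trans)
    then show False using assms(2) by contradiction
  qed
  then have "is_cycle (F - {g}) ends es vs" using cycle_sub[OF c(1)] by (intro cycle_mono[OF c(1)]) auto
  then show ?thesis using r cycfrom_def by blast
qed

lemma ess_cycfrom:
  assumes g: "g \<in> E" "\<not> oncyc g" and h: "ess h" "h \<noteq> g" and x: "x \<in> ends h"
  shows "cycfrom (E - {g}) x"
proof -
  have hE: "h \<in> E" using h ess_iff by blast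
  consider "oncyc h" | u v where "u \<noteq> v" "ends h = {u,v}" "\<not> reach (E - {h}) ends u v"
     "cycfrom (E - {h}) u" "cycfrom (E - {h}) v" using h(1) ess_iff by blast
  then show ?thesis
  proof cases
    case 1
    then obtain es vs where c: "is_cycle E ends es vs" "h \<in> set es" by (auto simp: oncyc_def)
    have "g \<notin> set es" using g c oncyc_def by blast
    then have "is_cycle (E - {g}) ends es vs" using cycle_sub[OF c(1)] by (intro cycle_mono[OF c(1)]) auto
    moreover have "x \<in> set vs" using cycle_ends_in[OF c(1,2)] x by auto
    ultimately show ?thesis by (rule cycfrom_cycle)
  next
    case 2
    obtain a b where ab: "ends g = {a,b}" using ends_uv g by blast
    have gE: "g \<in> E - {h}" using g h by auto
    have xuv: "x = u \<or> x = v" using 2 x by auto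
    have ruv: "reach (E - {g}) ends u v" using 2 hE h by (intro reach_edge) auto
    have "\<not> reach (E - {h}) ends u a \<or> \<not> reach (E - {h}) ends v a"
      using 2(3) by (meson reach_sym reach_trans)
    then show ?thesis
    proof
      assume na: "\<not> reach (E - {h}) ends u a"
      have "cycfrom (E - {h} - {g}) u" using side_cyc[OF 2(4) na gE _ ab] ab by auto
      then have cu: "cycfrom (E - {g}) u" by (rule cycfrom_mono) auto
      show ?thesis using xuv cu ruv by (metis cycfrom_reach reach_sym)
    next
      assume na: "\<not> reach (E - {h}) ends v a"
      have "cycfrom (E - {h} - {g}) v" using side_cyc[OF 2(5) na gE _ ab] ab by auto
      then have cv: "cycfrom (E - {g}) v" by (rule cycfrom_mono) auto
      show ?thesis using xuv cv ruv by (metis cycfrom_reach reach_sym)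
    qed
  qed
qed

lemma noness:
  assumes "g \<in> E" "\<not> ess g" "ends g = {a,b}" "a \<noteq> b"
  shows "\<not> oncyc g" "\<not> reach (E - {g}) ends a b" "\<not> (cycfrom (E - {g}) a \<and> cycfrom (E - {g}) b)"
proof -
  show no: "\<not> oncyc g" using assms oncyc_ess by blast
  show nr: "\<not> reach (E - {g}) ends a b"
    using reach_cycle[of g E ends a b] assms oncyc_def no by blast
  show "\<not> (cycfrom (E - {g}) a \<and> cycfrom (E - {g}) b)"
    using assms nr ess_iff by blast
qed

definition kv :: "'v \<Rightarrow> bool" where "kv x \<longleftrightarrow> (\<exists>h\<in>E. ess h \<and> x \<in> ends h)"

abbreviation NE :: "'e set" where "NE \<equiv> {f\<in>E. \<not> ess f}"

lemma path_tail_reach: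
  assumes p: "path ends F es vs" "es \<noteq> []"
  shows "reach (F - {es!0}) ends (vs!1) (last vs)"
proof -
  have "1 \<le> length es" using p(2) by (cases es) auto
  then have p1: "path ends F (drop 1 es) (drop 1 vs)" by (rule path_drop[OF p(1)])
  have lv: "length vs = Suc (length es)" using p by (simp add: path_def)
  have r: "reach (set (drop 1 es)) ends (hd (drop 1 vs)) (last (drop 1 vs))" using path_reach[OF p1] .
  have l1: "1 < length vs" using lv p(2) by (cases es) auto
  have "hd (drop 1 vs) = vs!1" using l1 by (rule hd_drop_conv_nth)
  moreover have "last (drop 1 vs) = last vs" using l1 by (simp add: last_drop)
  moreover have "set (drop 1 es) \<subseteq> F - {es!0}"
  proof -
    have d: "distinct es" using path_distinct_edges[OF p(1)] .
    have "es = es!0 # drop 1 es" using p(2) by (cases es) auto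
    then have "es!0 \<notin> set (drop 1 es)" using d by (metis distinct.simps(2))
    moreover have "set (drop 1 es) \<subseteq> F" using p(1) by (auto simp: path_def dest: in_set_dropD)
    ultimately show ?thesis by auto
  qed
  ultimately show ?thesis using r by (metis reach_mono)
qed

lemma path_first:
  assumes p: "path ends F es vs" "hd vs = x" "last vs = y" "x \<noteq> y"
  shows "es \<noteq> [] \<and> ends (es!0) = {x, vs!1} \<and> x \<noteq> vs!1 \<and> es!0 \<in> F"
proof -
  have lv: "length vs = Suc (length es)" "distinct vs" using p by (auto simp: path_def)
  have ne: "es \<noteq> []" using lv p by (cases vs) auto
  then have "ends (es!0) = {vs!0, vs!1}" using p by (auto simp: path_def)
  moreover have "vs!0 = x" using p lv by (cases vs) auto
  moreover have "vs!0 \<noteq> vs!1" using lv ne by (simp add: nth_eq_iff_index_eq)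
  moreover have "es!0 \<in> F" using p ne by (auto simp: path_def)
  ultimately show ?thesis using ne by auto
qed

lemma kv_sep:
  assumes "x \<noteq> y" "kv x" "kv y"
  shows "\<not> reach NE ends x y"
proof
  assume r: "reach NE ends x y"
  obtain es vs where p: "path ends NE es vs" "hd vs = x" "last vs = y" using reach_path[OF r] by blast
  note pf = path_first[OF p assms(1)]
  define g where "g = es!0"
  have g: "g \<in> E" "\<not> ess g" "ends g = {x, vs!1}" "x \<noteq> vs!1" using pf g_def by auto
  note nn = noness[OF g]
  obtain h where h: "h \<in> E" "ess h" "x \<in> ends h" using assms(2) kv_def by auto
  obtain h' where h': "h' \<in> E" "ess h'" "y \<in> ends h'" using assms(3) kv_def by auto
  have c1: "cycfrom (E - {g}) x" using ess_cycfrom[OF g(1) nn(1) h(2) _ h(3)] g h by auto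
  have c2: "cycfrom (E - {g}) y" using ess_cycfrom[OF g(1) nn(1) h'(2) _ h'(3)] g h' by auto
  have "reach (NE - {g}) ends (vs!1) y" using path_tail_reach[OF p(1)] pf p g_def by auto
  then have "reach (E - {g}) ends (vs!1) y" by (rule reach_mono) auto
  then have "cycfrom (E - {g}) (vs!1)" using c2 by (rule cycfrom_reach[rotated])
  then show False using nn(3) c1 by blast
qed

lemma other_ess:
  assumes h: "h \<in> E" "ess h" "x \<in> ends h" "ends h \<noteq> {x}"
  shows "\<exists>h'\<in>E. ess h' \<and> x \<in> ends h' \<and> h' \<noteq> h"
proof -
  obtain u0 v0 where uv: "ends h = {u0,v0}" using ends_uv[OF h(1)] by blast
  then have xuv: "x = u0 \<or> x = v0" using h(3) by auto
  define p where "p = (if x = u0 then v0 else u0)"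
  have p1: "ends h = {x,p}" using uv xuv by (auto simp: p_def)
  then have p: "ends h = {x, p}" "p \<noteq> x" using h(4) by auto
  consider "oncyc h" | u v where "u \<noteq> v" "ends h = {u,v}" "\<not> reach (E - {h}) ends u v"
     "cycfrom (E - {h}) u" "cycfrom (E - {h}) v" using h(2) ess_iff by blast
  then show ?thesis
  proof cases
    case 1
    then obtain es vs where c: "is_cycle E ends es vs" "h \<in> set es" by (auto simp: oncyc_def)
    have xv: "x \<in> set vs" using cycle_ends_in[OF c] h by auto
    have "length es \<noteq> 1"
    proof
      assume "length es = 1"
      then obtain e0 where "es = [e0]" by (cases es) auto
      then have "ends h = {vs!0}" using c by (auto simp: is_cycle_def)
      then show False using p by auto
    qed
    then have "card {e\<in>set es. x \<in> ends e} \<ge> 2" using cycle_two[OF c(1) xv] by simp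
    then obtain h' where "h' \<in> set es" "x \<in> ends h'" "h' \<noteq> h"
    proof -
      assume *: "\<And>h'. h' \<in> set es \<Longrightarrow> x \<in> ends h' \<Longrightarrow> h' \<noteq> h \<Longrightarrow> thesis"
      show thesis
      proof (rule ccontr)
        assume "\<not> thesis"
        then have "{e\<in>set es. x \<in> ends e} \<subseteq> {h}" using * by auto
        then have "card {e\<in>set es. x \<in> ends e} \<le> card {h}" by (intro card_mono) auto
        then show False using \<open>card _ \<ge> 2\<close> by simp
      qed
    qed
    moreover have "set es \<subseteq> E" using cycle_sub[OF c(1)] .
    ultimately show ?thesis using cycle_ess[OF c(1)] by blast
  next
    case 2
    have "x = u \<or> x = v" using 2 h by auto
    then have xs: "\<not> reach (E - {h}) ends x p \<and> cycfrom (E - {h}) x"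
      using 2 p by (auto simp: doubleton_eq_iff dest: reach_sym)
    then obtain es vs where c: "is_cycle (E - {h}) ends es vs" "reach (E - {h}) ends x (hd vs)"
      unfolding cycfrom_def by blast
    have cE: "is_cycle E ends es vs" using cycle_sub[OF c(1)] by (intro cycle_mono[OF c(1)]) auto
    show ?thesis
    proof (cases "x \<in> set vs")
      case True
      then obtain e where "e \<in> set es" "x \<in> ends e" using cycle_vertex_edge[OF c(1)] by blast
      moreover have "set es \<subseteq> E - {h}" using cycle_sub[OF c(1)] .
      ultimately show ?thesis using cycle_ess[OF cE] by blast
    next
      case False
      then have xne: "x \<noteq> hd vs" using cycle_hd[OF c(1)] by auto
      obtain es' vs' where pp: "path ends (E - {h}) es' vs'" "hd vs' = x" "last vs' = hd vs"
        using reach_path[OF c(2)] by blast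
      note pf = path_first[OF pp xne]
      define f where "f = es'!0"
      have f: "f \<in> E" "ends f = {x, vs'!1}" "x \<noteq> vs'!1" "f \<noteq> h" using pf f_def by auto
      show ?thesis
      proof (cases "ess f")
        case True then show ?thesis using f by auto
      next
        case False
        note nn = noness[OF f(1) False f(2,3)]
        have c1: "cycfrom (E - {f}) x" using ess_cycfrom[OF f(1) nn(1) h(2) f(4)[symmetric] h(3)] .
        have "f \<notin> set es" using nn(1) cE oncyc_def by blast
        then have cf: "is_cycle (E - {f}) ends es vs" using cycle_sub[OF cE] by (intro cycle_mono[OF cE]) auto
        have "reach (E - {h} - {es'!0}) ends (vs'!1) (hd vs)" using path_tail_reach[OF pp(1)] pf pp by auto
        then have "reach (E - {f}) ends (vs'!1) (hd vs)" unfolding f_def by (rule reach_mono) auto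
        then have "cycfrom (E - {f}) (vs'!1)" using cf cycfrom_def by blast
        then show ?thesis using nn(3) c1 by blast
      qed
    qed
  qed
qed

lemma kv_dg: assumes "kv x" shows "dg x \<ge> 2"
proof -
  obtain h where h: "h \<in> E" "ess h" "x \<in> ends h" using assms kv_def by auto
  have fin: "finite {e\<in>E. ess e \<and> x \<in> ends e}" "finite {e\<in>E. ess e \<and> ends e = {x}}" using finE by auto
  show ?thesis
  proof (cases "ends h = {x}")
    case True
    then have "h \<in> {e\<in>E. ess e \<and> x \<in> ends e}" "h \<in> {e\<in>E. ess e \<and> ends e = {x}}" using h by auto
    then have "card {e\<in>E. ess e \<and> x \<in> ends e} > 0" "card {e\<in>E. ess e \<and> ends e = {x}} > 0"
      using fin by (auto simp: card_gt_0_iff)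
    then show ?thesis by (simp add: dg_def)
  next
    case False
    then obtain h' where h': "h' \<in> E" "ess h'" "x \<in> ends h'" "h' \<noteq> h" using other_ess h by blast
    then have "{h, h'} \<subseteq> {e\<in>E. ess e \<and> x \<in> ends e}" using h by auto
    then have "card {h,h'} \<le> card {e\<in>E. ess e \<and> x \<in> ends e}" using fin by (intro card_mono)
    then show ?thesis using h'(4) by (simp add: dg_def)
  qed
qed

lemma essv_kv: assumes "essv v" shows "kv v"
proof -
  have "dg v \<ge> 3" using assms essv_iff by auto
  moreover have "{e\<in>E. ess e \<and> ends e = {v}} \<subseteq> {e\<in>E. ess e \<and> v \<in> ends e}" by auto
  ultimately have "{e\<in>E. ess e \<and> v \<in> ends e} \<noteq> {}" unfolding dg_def
    by (metis (no_types, lifting) add_0 card.empty not_numeral_le_zero subset_empty)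
  then show ?thesis unfolding kv_def by auto
qed

lemma nonessv_dg: "x \<in> V \<Longrightarrow> \<not> essv x \<Longrightarrow> dg x \<le> 2"
  using essv_iff by auto

end


lemma conn_closure:
  assumes S: "\<forall>f. Q\<^sup>*\<^sup>* e f \<longrightarrow> f \<in> S" and Q: "\<forall>f h. Q f h \<longrightarrow> (\<exists>x. x \<in> ends f \<and> x \<in> ends h)"
    and uv: "\<forall>f\<in>S. \<exists>u v. ends f = {u,v}" and a: "a \<in> ends e"
  shows "Q\<^sup>*\<^sup>* e f \<Longrightarrow> y \<in> ends f \<Longrightarrow> reach S ends a y"
proof (induction arbitrary: y rule: rtranclp_induct)
  case base
  have "e \<in> S" using S by auto
  moreover obtain u v where "ends e = {u,v}" using uv calculation by blast
  ultimately show ?case using a base by (intro reach_in_edge[of e S ends u v a y])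
next
  case (step f h)
  obtain x where x: "x \<in> ends f" "x \<in> ends h" using Q step(2) by blast
  have r1: "reach S ends a x" using step.IH x(1) .
  have "h \<in> S" using S step(1,2) by (meson rtranclp.rtrancl_into_rtrancl)
  moreover obtain u v where "ends h = {u,v}" using uv calculation by blast
  ultimately have "reach S ends x y" using x step.prems by (intro reach_in_edge[of h S ends u v x y])
  with r1 show ?case by (rule reach_trans)
qed

context mg begin

abbreviation crit :: "'v \<Rightarrow> 'e \<Rightarrow> bool" where "crit x f \<equiv> critical V E ends x f"

lemma crit_iff: "crit x f \<longleftrightarrow> x \<in> ends f \<and> essv x \<and> ess f"
  by (simp add: critical_def)

definition R :: "'e \<Rightarrow> 'e \<Rightarrow> bool" where
  "R f h \<longleftrightarrow> f \<in> E \<and> h \<in> E \<and> (\<exists>x. x \<in> ends f \<and> x \<in> ends h \<and> \<not> crit x f \<and> \<not> crit x h)"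

definition cls :: "'e \<Rightarrow> 'e set" where "cls e = {f. R\<^sup>*\<^sup>* e f}"

lemma R_sym: "R f h \<Longrightarrow> R h f" unfolding R_def by blast

lemma Rs_sym: "R\<^sup>*\<^sup>* a b \<Longrightarrow> R\<^sup>*\<^sup>* b a"
proof (induction rule: rtranclp_induct)
  case base then show ?case by simp
next
  case (step y z)
  then show ?case using R_sym by (meson converse_rtranclp_into_rtranclp)
qed

lemma Rs_E: "R\<^sup>*\<^sup>* e f \<Longrightarrow> e \<in> E \<Longrightarrow> f \<in> E"
  by (induction rule: rtranclp_induct) (auto simp: R_def)

lemma cls_sub: "e \<in> E \<Longrightarrow> cls e \<subseteq> E" using Rs_E cls_def by blast
lemma cls_self: "e \<in> cls e" by (simp add: cls_def)
lemma cls_eq: "f \<in> cls e \<Longrightarrow> cls f = cls e"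
  unfolding cls_def by (auto intro: rtranclp_trans Rs_sym)
lemma cls_disj: "x \<in> cls e \<Longrightarrow> x \<in> cls f \<Longrightarrow> cls e = cls f"
  using cls_eq by metis
lemma cls_R: "f \<in> cls e \<Longrightarrow> R f h \<Longrightarrow> h \<in> cls e"
  unfolding cls_def by (auto intro: rtranclp.rtrancl_into_rtrancl)

lemma cls_closure: "(\<And>f h. f \<in> S \<Longrightarrow> R f h \<Longrightarrow> h \<in> S) \<Longrightarrow> e \<in> S \<Longrightarrow> cls e \<subseteq> S"
proof
  fix f assume a: "\<And>f h. f \<in> S \<Longrightarrow> R f h \<Longrightarrow> h \<in> S" "e \<in> S" "f \<in> cls e"
  from a(3) have "R\<^sup>*\<^sup>* e f" by (simp add: cls_def)
  then show "f \<in> S" by (induction rule: rtranclp_induct) (use a in auto)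
qed

lemma R_nonessv: "f \<in> E \<Longrightarrow> h \<in> E \<Longrightarrow> x \<in> ends f \<Longrightarrow> x \<in> ends h \<Longrightarrow> \<not> essv x \<Longrightarrow> R f h"
  unfolding R_def crit_iff by blast

lemma R_noness: "f \<in> E \<Longrightarrow> h \<in> E \<Longrightarrow> x \<in> ends f \<Longrightarrow> x \<in> ends h \<Longrightarrow> \<not> ess f \<Longrightarrow> \<not> ess h \<Longrightarrow> R f h"
  unfolding R_def crit_iff by blast

definition walk :: "'e list \<Rightarrow> 'v list \<Rightarrow> bool" where
  "walk es vs \<longleftrightarrow> es \<noteq> [] \<and> length vs = length es + 1 \<and> set es \<subseteq> E \<and>
     (\<forall>i<length es. ends (es ! i) = {vs ! i, vs ! Suc i}) \<and>
     (\<forall>i. 0 < i \<and> i < length es \<longrightarrow> \<not> crit (vs ! i) (es ! (i - 1)) \<and> \<not> crit (vs ! i) (es ! i))"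

lemma fern_sim_walk: "fern_sim V E ends e f \<longleftrightarrow> (\<exists>es vs. walk es vs \<and> hd es = e \<and> last es = f)"
  unfolding fern_sim_def walk_def by blast

lemma walk_R:
  assumes w: "walk es vs" shows "i < length es \<Longrightarrow> R\<^sup>*\<^sup>* (es!0) (es!i)"
proof (induction i)
  case 0 then show ?case by simp
next
  case (Suc i)
  have l: "i < length es" using Suc.prems by simp
  have "R (es!i) (es!Suc i)" unfolding R_def
  proof (intro conjI exI)
    show "es!i \<in> E" "es!Suc i \<in> E" using w l Suc.prems by (auto simp: walk_def)
    show "vs!Suc i \<in> ends (es!i)" "vs!Suc i \<in> ends (es!Suc i)" using w l Suc.prems by (auto simp: walk_def)
    show "\<not> crit (vs!Suc i) (es!i)" "\<not> crit (vs!Suc i) (es!Suc i)"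
      using w Suc.prems unfolding walk_def by (metis diff_Suc_1 zero_less_Suc)+
  qed
  then show ?case using Suc.IH l by (meson rtranclp.rtrancl_into_rtrancl)
qed

lemma fern_sim_R: "fern_sim V E ends e f \<Longrightarrow> R\<^sup>*\<^sup>* e f"
proof -
  assume "fern_sim V E ends e f"
  then obtain es vs where w: "walk es vs" "hd es = e" "last es = f" using fern_sim_walk by blast
  have ne: "es \<noteq> []" using w walk_def by blast
  have "R\<^sup>*\<^sup>* (es!0) (es!(length es - 1))" using walk_R[OF w(1)] ne by simp
  then show ?thesis using w ne by (simp add: hd_conv_nth last_conv_nth)
qed

lemma walk_step:
  assumes w: "walk es vs" "hd es = e" "last es = f" and r: "R f g"
  shows "\<exists>es vs. walk es vs \<and> hd es = e \<and> last es = g"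
proof -
  obtain x where x: "x \<in> ends f" "x \<in> ends g" "\<not> crit x f" "\<not> crit x g" "g \<in> E" using r R_def by blast
  obtain u v where uv: "ends g = {u,v}" using ends_uv x(5) by blast
  define y where "y = (if x = u then v else u)"
  have g: "ends g = {x, y}" using uv x(2) y_def by auto
  define l where "l = length es"
  have l: "l > 0" "length vs = l + 1" using w by (auto simp: walk_def l_def)
  have fl: "f = es ! (l - 1)" using w l by (simp add: last_conv_nth l_def)
  have ef: "ends f = {vs!(l-1), vs!l}" using w l fl unfolding walk_def l_def
    by (metis Suc_pred' diff_less zero_less_one)
  show ?thesis
  proof (cases "x = vs!l")
    case True
    have "walk (es @ [g]) (vs @ [y])" unfolding walk_def
    proof (intro conjI allI impI)
      show "es @ [g] \<noteq> []" by simp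
      show "length (vs @ [y]) = length (es @ [g]) + 1" using l by (simp add: l_def)
      show "set (es @ [g]) \<subseteq> E" using w x by (auto simp: walk_def)
      fix i assume i: "i < length (es @ [g])"
      show "ends ((es @ [g]) ! i) = {(vs @ [y]) ! i, (vs @ [y]) ! Suc i}"
      proof (cases "i < l")
        case True then show ?thesis using w l by (auto simp: walk_def nth_append l_def)
      next
        case False then have "i = l" using i by (simp add: l_def)
        then show ?thesis using g True l by (simp add: nth_append l_def)
      qed
    next
      fix i assume i: "0 < i \<and> i < length (es @ [g])"
      have AB: "\<not> crit ((vs @ [y]) ! i) ((es @ [g]) ! (i - 1)) \<and> \<not> crit ((vs @ [y]) ! i) ((es @ [g]) ! i)"
      proof (cases "i < l")
        case True then show ?thesis using w l i by (auto simp: walk_def nth_append l_def)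
      next
        case False then have "i = l" using i by (simp add: l_def)
        then show ?thesis using x True l fl by (simp add: nth_append l_def)
      qed
      then show "\<not> crit ((vs @ [y]) ! i) ((es @ [g]) ! (i - 1))" by simp
      from AB show "\<not> crit ((vs @ [y]) ! i) ((es @ [g]) ! i)" by simp
    qed
    moreover have "hd (es @ [g]) = e" using w l by (auto simp: l_def)
    ultimately show ?thesis by (metis last_snoc)
  next
    case False
    then have xl: "x = vs!(l-1)" using ef x(1) by auto
    show ?thesis
    proof (cases "l = 1")
      case True
      have es1: "es = [f]" using w True fl by (cases es) (auto simp: l_def)
      have "walk [f, g] [vs!1, x, y]" unfolding walk_def
      proof (intro conjI allI impI)
        show "set [f, g] \<subseteq> E" using w es1 x by (auto simp: walk_def)
        fix i assume "i < length [f, g]"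
        then have "i = 0 \<or> i = 1" by auto
        then show "ends ([f, g] ! i) = {[vs ! 1, x, y] ! i, [vs ! 1, x, y] ! Suc i}"
          using ef xl True g by (auto simp: insert_commute)
      next
        fix i assume "0 < i \<and> i < length [f, g]"
        then have "i = 1" by auto
        then show "\<not> crit ([vs ! 1, x, y] ! i) ([f, g] ! (i - 1))" "\<not> crit ([vs ! 1, x, y] ! i) ([f, g] ! i)"
          using x by simp_all
      qed simp_all
      moreover have "hd [f, g] = e" using w es1 by simp
      ultimately show ?thesis by (metis last.simps list.distinct(1) last_ConsL)
    next
      case False
      then have l2: "l \<ge> 2" using l by simp
      define es' where "es' = take (l - 1) es @ [g]"
      define vs' where "vs' = take l vs @ [y]"
      have les: "length es' = l" using l2 by (simp add: es'_def l_def)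
      have lvs: "length vs' = l + 1" using l by (simp add: vs'_def)
      have ev: "i < l - 1 \<Longrightarrow> es'!i = es!i" for i using l2 by (simp add: es'_def nth_append l_def)
      have eg: "es'!(l-1) = g" using l2 by (simp add: es'_def nth_append l_def)
      have vv: "i < l \<Longrightarrow> vs'!i = vs!i" for i using l by (simp add: vs'_def nth_append)
      have vy: "vs'!l = y" using l by (simp add: vs'_def nth_append)
      have "walk es' vs'" unfolding walk_def
      proof (intro conjI allI impI)
        show "es' \<noteq> []" by (simp add: es'_def)
        show "length vs' = length es' + 1" using les lvs by simp
        show "set es' \<subseteq> E" using w x by (auto simp: walk_def es'_def dest: in_set_takeD)
        fix i assume i: "i < length es'"
        show "ends (es' ! i) = {vs' ! i, vs' ! Suc i}"
        proof (cases "i < l - 1")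
          case True then show ?thesis using w ev vv l2 by (auto simp: walk_def l_def)
        next
          case False then have "i = l - 1" using i les by arith
          then show ?thesis using eg vv vy g xl l2 by simp
        qed
      next
        fix i assume i: "0 < i \<and> i < length es'"
        have AB: "\<not> crit (vs' ! i) (es' ! (i - 1)) \<and> \<not> crit (vs' ! i) (es' ! i)"
        proof (cases "i < l - 1")
          case True then show ?thesis using w ev vv l2 i by (auto simp: walk_def l_def)
        next
          case False then have il: "i = l - 1" using i les by arith
          have c: "0 < l - 1 \<and> l - 1 < length es" using l2 by (simp add: l_def)
          have "\<forall>i. 0 < i \<and> i < length es \<longrightarrow> \<not> crit (vs ! i) (es ! (i - 1)) \<and> \<not> crit (vs ! i) (es ! i)"
            using w(1) walk_def by blast
          from this[rule_format, OF c] have "\<not> crit (vs!(l-1)) (es!(l-1-1))" by simp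
          then show ?thesis using il eg vv ev x xl l2 by simp
        qed
        then show "\<not> crit (vs' ! i) (es' ! (i - 1))" by simp
        from AB show "\<not> crit (vs' ! i) (es' ! i)" by simp
      qed
      moreover have "hd es' = e" using w l2 by (cases es; cases "length es - 1") (auto simp: es'_def l_def)
      moreover have "last es' = g" by (simp add: es'_def)
      ultimately show ?thesis by blast
    qed
  qed
qed

lemma R_fern_sim: "R\<^sup>*\<^sup>* e f \<Longrightarrow> e \<in> E \<Longrightarrow> fern_sim V E ends e f"
proof (induction rule: rtranclp_induct)
  case base
  obtain u v where uv: "ends e = {u,v}" using ends_uv base by blast
  have "walk [e] [u,v]" using uv base by (auto simp: walk_def)
  then show ?case using fern_sim_walk by fastforce
next
  case (step f g)
  then obtain es vs where "walk es vs" "hd es = e" "last es = f" using fern_sim_walk by blast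
  then show ?case using walk_step step fern_sim_walk by blast
qed

lemma fern_sim_cls: "e \<in> E \<Longrightarrow> {f\<in>E. fern_sim V E ends e f} = cls e"
  using fern_sim_R R_fern_sim cls_sub cls_def by blast

lemma sim_classes_eq: "sim_classes V E ends = cls ` E"
  unfolding sim_classes_def using fern_sim_cls by (auto simp: image_def)

end


context mg begin

definition Vert :: "'e set \<Rightarrow> 'v set" where "Vert C = \<Union>(ends ` C)"

lemma reach_within_edge: "f \<in> F \<Longrightarrow> F \<subseteq> E \<Longrightarrow> x \<in> ends f \<Longrightarrow> y \<in> ends f \<Longrightarrow> reach F ends x y"
proof -
  assume a: "f \<in> F" "F \<subseteq> E" "x \<in> ends f" "y \<in> ends f"
  obtain u w where uw: "ends f = {u,w}" using ends_uv a by blast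
  show ?thesis using a uw by (intro reach_in_edge[of f F ends u w x y])
qed

lemma kv_eq: "kv x \<Longrightarrow> kv y \<Longrightarrow> reach NE ends x y \<Longrightarrow> x = y"
proof (rule ccontr)
  assume a: "kv x" "kv y" "reach NE ends x y" "x \<noteq> y"
  have "\<not> reach NE ends x y" by (rule kv_sep[OF a(4) a(1) a(2)])
  then show False using a(3) by contradiction
qed

lemma P_closed:
  assumes v: "essv v" and f: "f \<in> {f\<in>E. \<not> ess f \<and> (\<exists>y\<in>ends f. reach NE ends v y)}" and r: "R f h"
  shows "h \<in> {f\<in>E. \<not> ess f \<and> (\<exists>y\<in>ends f. reach NE ends v y)}"
proof -
  obtain x where x: "x \<in> ends f" "x \<in> ends h" "\<not> crit x f" "\<not> crit x h" "h \<in> E" using r R_def by blast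
  obtain y where y: "y \<in> ends f" "reach NE ends v y" using f by blast
  have fN: "f \<in> NE" using f by blast
  have "reach NE ends y x" using reach_within_edge[OF fN _ y(1) x(1)] by blast
  with y(2) have rx: "reach NE ends v x" by (rule reach_trans)
  show ?thesis
  proof (cases "ess h")
    case True
    have "kv x" using True x kv_def by blast
    moreover have "kv v" using essv_kv v .
    ultimately have "x = v" using kv_eq rx by blast
    then have "crit x h" using crit_iff x v True by simp
    with x show ?thesis by simp
  next
    case False then show ?thesis using x rx by blast
  qed
qed

lemma P_class: assumes "essv v" "g \<in> E" "\<not> ess g" "v \<in> ends g" shows "cls g \<subseteq> NE"
proof -
  let ?S = "{f\<in>E. \<not> ess f \<and> (\<exists>y\<in>ends f. reach NE ends v y)}"
  have "cls g \<subseteq> ?S"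
  proof (rule cls_closure)
    show "\<And>f h. f \<in> ?S \<Longrightarrow> R f h \<Longrightarrow> h \<in> ?S" by (rule P_closed[OF assms(1)])
    have "reach NE ends v v" by simp
    then show "g \<in> ?S" using assms by blast
  qed
  then show ?thesis by auto
qed

definition RK :: "'e \<Rightarrow> 'e \<Rightarrow> bool" where "RK f h \<longleftrightarrow> R f h \<and> ess f \<and> ess h"

definition Dset :: "'e \<Rightarrow> 'e set" where "Dset e = {f. RK\<^sup>*\<^sup>* e f}"

lemma ess_E: "ess f \<Longrightarrow> f \<in> E" using ess_iff by blast

lemma RK_shared: "RK f h \<Longrightarrow> \<exists>x. x \<in> ends f \<and> x \<in> ends h \<and> \<not> essv x"
  unfolding RK_def R_def crit_iff by blast

lemma RK_intro: "ess f \<Longrightarrow> ess h \<Longrightarrow> x \<in> ends f \<Longrightarrow> x \<in> ends h \<Longrightarrow> \<not> essv x \<Longrightarrow> RK f h"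
  unfolding RK_def using R_nonessv ess_E by blast

lemma RK_sym: "RK f h \<Longrightarrow> RK h f" unfolding RK_def using R_sym by blast

lemma RKs_sym: "RK\<^sup>*\<^sup>* a b \<Longrightarrow> RK\<^sup>*\<^sup>* b a"
proof (induction rule: rtranclp_induct)
  case base then show ?case by simp
next
  case (step y z)
  then show ?case using RK_sym by (meson converse_rtranclp_into_rtranclp)
qed

lemma D_ess: "ess e \<Longrightarrow> f \<in> Dset e \<Longrightarrow> ess f"
proof -
  assume e: "ess e" and f: "f \<in> Dset e"
  from f have "RK\<^sup>*\<^sup>* e f" by (simp add: Dset_def)
  then show "ess f" by (induction rule: rtranclp_induct) (use e RK_def in auto)
qed

lemma D_sub_cls: "Dset e \<subseteq> cls e"
proof
  fix f assume "f \<in> Dset e"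
  then have "RK\<^sup>*\<^sup>* e f" by (simp add: Dset_def)
  then have "R\<^sup>*\<^sup>* e f" by (induction rule: rtranclp_induct) (auto simp: RK_def intro: rtranclp.rtrancl_into_rtrancl)
  then show "f \<in> cls e" by (simp add: cls_def)
qed

lemma D_self: "e \<in> Dset e" by (simp add: Dset_def)

lemma D_step: "f \<in> Dset e \<Longrightarrow> RK f h \<Longrightarrow> h \<in> Dset e"
  unfolding Dset_def by (auto intro: rtranclp.rtrancl_into_rtrancl)

lemma D_same: "f \<in> Dset e \<Longrightarrow> Dset f = Dset e"
  unfolding Dset_def by (auto intro: rtranclp_trans RKs_sym)

lemma D_sub_E: "ess e \<Longrightarrow> Dset e \<subseteq> E" using D_ess ess_E by blast

lemma D_closed:
  assumes e: "ess e"
    and f: "f \<in> Dset e \<union> {g\<in>E. \<not> ess g \<and> (\<exists>x\<in>Vert (Dset e). \<not> essv x \<and> (\<exists>y\<in>ends g. reach NE ends x y))}"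
    and r: "R f h"
  shows "h \<in> Dset e \<union> {g\<in>E. \<not> ess g \<and> (\<exists>x\<in>Vert (Dset e). \<not> essv x \<and> (\<exists>y\<in>ends g. reach NE ends x y))}"
proof -
  obtain x where x: "x \<in> ends f" "x \<in> ends h" "\<not> crit x f" "\<not> crit x h" "h \<in> E" "f \<in> E" using r R_def by blast
  show ?thesis
  proof (cases "f \<in> Dset e")
    case True
    have ef: "ess f" using D_ess[OF e True] .
    then have nx: "\<not> essv x" using x crit_iff by blast
    show ?thesis
    proof (cases "ess h")
      case True
      then have "RK f h" using RK_def r ef by blast
      then show ?thesis using D_step \<open>f \<in> Dset e\<close> by blast
    next
      case False
      have "x \<in> Vert (Dset e)" using \<open>f \<in> Dset e\<close> x(1) Vert_def by blast
      moreover have "reach NE ends x x" by simp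
      ultimately show ?thesis using False x nx by blast
    qed
  next
    case False
    then obtain x0 y where x0: "x0 \<in> Vert (Dset e)" "\<not> essv x0" "y \<in> ends f" "reach NE ends x0 y" "\<not> ess f"
      using f by blast
    have fN: "f \<in> NE" using x0 x by blast
    have "reach NE ends y x" using reach_within_edge[OF fN _ x0(3) x(1)] by blast
    with x0(4) have rx: "reach NE ends x0 x" by (rule reach_trans)
    show ?thesis
    proof (cases "ess h")
      case True
      obtain f' where f': "f' \<in> Dset e" "x0 \<in> ends f'" using x0(1) Vert_def by blast
      have ef': "ess f'" using D_ess[OF e f'(1)] .
      have "kv x" using True x kv_def by blast
      moreover have "kv x0" using ef' f' kv_def ess_E by blast
      ultimately have "x = x0" using kv_eq rx by blast
      then have "RK f' h" using RK_intro[OF ef' True f'(2)] x(2) x0(2) by blast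
      then show ?thesis using D_step f'(1) by blast
    next
      case False
      then show ?thesis using x x0 rx by blast
    qed
  qed
qed

lemma D_eq: assumes e: "ess e" shows "{f\<in>cls e. ess f} = Dset e"
proof
  let ?C0 = "Dset e \<union> {g\<in>E. \<not> ess g \<and> (\<exists>x\<in>Vert (Dset e). \<not> essv x \<and> (\<exists>y\<in>ends g. reach NE ends x y))}"
  have "cls e \<subseteq> ?C0"
  proof (rule cls_closure)
    show "\<And>f h. f \<in> ?C0 \<Longrightarrow> R f h \<Longrightarrow> h \<in> ?C0" by (rule D_closed[OF e])
    show "e \<in> ?C0" using D_self by blast
  qed
  then show "{f\<in>cls e. ess f} \<subseteq> Dset e" by auto
  show "Dset e \<subseteq> {f\<in>cls e. ess f}" using D_sub_cls D_ess[OF e] by auto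
qed

lemma cls_ess_at_essv:
  assumes e: "ess e" and v: "essv v" and f: "f \<in> cls e" "v \<in> ends f"
  shows "ess f"
proof (rule ccontr)
  assume nf: "\<not> ess f"
  have fE: "f \<in> E" using cls_sub[OF ess_E[OF e]] f by blast
  have "cls f \<subseteq> NE" using P_class[OF v fE nf f(2)] .
  moreover have "e \<in> cls f" using cls_eq[OF f(1)] cls_self by blast
  ultimately show False using e by blast
qed

lemma internal_all:
  assumes e: "ess e" and x: "x \<in> Vert (Dset e)" "\<not> essv x" and h: "ess h" "x \<in> ends h"
  shows "h \<in> Dset e"
proof -
  obtain f where f: "f \<in> Dset e" "x \<in> ends f" using x Vert_def by blast
  have "RK f h" using RK_intro[OF D_ess[OF e f(1)] h(1) f(2) h(2) x(2)] .
  then show ?thesis using D_step f(1) by blast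
qed

lemma internal_deg:
  assumes e: "ess e" and x: "x \<in> Vert (Dset e)" "\<not> essv x"
  shows "degree (Dset e) ends x = 2"
proof -
  have s1: "{f\<in>Dset e. x \<in> ends f} = {f\<in>E. ess f \<and> x \<in> ends f}"
    using internal_all[OF e x] D_ess[OF e] D_sub_E[OF e] by auto
  have s2: "{f\<in>Dset e. ends f = {x}} = {f\<in>E. ess f \<and> ends f = {x}}"
    using internal_all[OF e x] D_ess[OF e] D_sub_E[OF e] by auto
  have dd: "degree (Dset e) ends x = dg x" unfolding degree_def dg_def s1 s2 ..
  obtain f where f: "f \<in> Dset e" "x \<in> ends f" using x Vert_def by blast
  have "kv x" using D_ess[OF e f(1)] f ess_E kv_def by blast
  then have "dg x \<ge> 2" by (rule kv_dg)
  moreover have "x \<in> V" using f D_sub_E[OF e] ends_sub by blast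
  then have "dg x \<le> 2" using nonessv_dg x(2) by blast
  ultimately show ?thesis using dd by simp
qed

lemma bdry_essv:
  assumes e0: "e0 \<in> E" and v: "v \<in> Vert (cls e0)" and g: "g \<in> E - cls e0" "v \<in> ends g"
  shows "essv v"
proof (rule ccontr)
  assume nv: "\<not> essv v"
  obtain f where f: "f \<in> cls e0" "v \<in> ends f" using v Vert_def by blast
  have "f \<in> E" using f cls_sub[OF e0] by blast
  then have "R f g" using R_nonessv[of f g v] g f nv by blast
  then have "g \<in> cls e0" using cls_R f(1) by blast
  then show False using g by blast
qed

end


context mg begin

definition sig :: "'e \<Rightarrow> 'v \<Rightarrow> 'v \<times> 'e option" where
  "sig f x = (if essv x then (x, Some f) else (x, None))"

definition endsS :: "'e \<Rightarrow> ('v \<times> 'e option) set" where "endsS f = sig f ` ends f"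

lemma sig_None: "sig f y = (x, None) \<longleftrightarrow> y = x \<and> \<not> essv x"
  by (auto simp: sig_def)

lemma sig_Some: "sig f' y = (v, Some f) \<longleftrightarrow> y = v \<and> essv v \<and> f' = f"
  by (auto simp: sig_def)

lemma sig_Some': "(v, Some f) = sig f' y \<longleftrightarrow> y = v \<and> essv v \<and> f' = f"
  by (auto simp: sig_def)

lemma Vert_sub: "C \<subseteq> E \<Longrightarrow> Vert C \<subseteq> V" using ends_sub by (auto simp: Vert_def)

lemma count_CI:
  assumes e: "ess e" and nl: "\<forall>f\<in>Dset e. \<forall>v. ends f = {v} \<longrightarrow> \<not> essv v"
  shows "card {(v,f). f \<in> Dset e \<and> v \<in> ends f \<and> essv v} \<le> 2 \<and>
         even (card {(v,f). f \<in> Dset e \<and> v \<in> ends f \<and> essv v})"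
proof -
  define D where "D = Dset e"
  define CI where "CI = {(v,f). f \<in> D \<and> v \<in> ends f \<and> essv v}"
  define Ins where "Ins = {x \<in> Vert D. \<not> essv x}"
  define W where "W = \<Union>(endsS ` D)"
  have DE: "D \<subseteq> E" using D_sub_E[OF e] D_def by simp
  have finD: "finite D" using DE finE finite_subset by blast
  have finVD: "finite (Vert D)" using Vert_sub[OF DE] finV finite_subset by blast
  have finInt: "finite Ins" using finVD Ins_def by simp
  have "CI \<subseteq> Vert D \<times> D" unfolding CI_def Vert_def by auto
  then have finCI: "finite CI" using finVD finD finite_subset by blast
  define i1 where "i1 = (\<lambda>x::'v. (x, None::'e option))"
  define i2 where "i2 = (\<lambda>(v::'v, f::'e). (v, Some f))"
  have W_eq: "W = i1 ` Ins \<union> i2 ` CI"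
  proof
    show "W \<subseteq> i1 ` Ins \<union> i2 ` CI"
    proof
      fix w assume "w \<in> W"
      then obtain f y where fy: "f \<in> D" "y \<in> ends f" "w = sig f y" unfolding W_def endsS_def by blast
      show "w \<in> i1 ` Ins \<union> i2 ` CI"
      proof (cases "essv y")
        case True
        then have "w = i2 (y, f)" "(y, f) \<in> CI" using fy by (auto simp: sig_def i2_def CI_def)
        then show ?thesis by blast
      next
        case False
        then have "w = i1 y" "y \<in> Ins" using fy by (auto simp: sig_def i1_def Ins_def Vert_def)
        then show ?thesis by blast
      qed
    qed
    show "i1 ` Ins \<union> i2 ` CI \<subseteq> W"
    proof
      fix w assume "w \<in> i1 ` Ins \<union> i2 ` CI"
      then consider x where "x \<in> Ins" "w = i1 x" | v f where "(v,f) \<in> CI" "w = i2 (v,f)" by auto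
      then show "w \<in> W"
      proof cases
        case 1
        then obtain f where "f \<in> D" "x \<in> ends f" "\<not> essv x" unfolding Ins_def Vert_def by blast
        then show ?thesis using 1 unfolding W_def endsS_def i1_def by (auto simp: sig_def)
      next
        case 2
        then show ?thesis unfolding W_def endsS_def i2_def CI_def by (auto simp: sig_def)
      qed
    qed
  qed
  have inj1: "inj_on i1 Ins" by (auto simp: inj_on_def i1_def)
  have inj2: "inj_on i2 CI" by (auto simp: inj_on_def i2_def)
  have disj: "i1 ` Ins \<inter> i2 ` CI = {}" by (auto simp: i1_def i2_def)
  have finW: "finite W" using W_eq finInt finCI by simp
  have cardW: "card W = card Ins + card CI"
    using W_eq card_Un_disjoint[OF _ _ disj] finInt finCI card_image[OF inj1] card_image[OF inj2] by simp
  obtain a b where ab: "ends e = {a,b}" using ends_uv ess_E[OF e] by blast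
  have eD: "e \<in> D" using D_self D_def by simp
  have uvS: "\<forall>f\<in>D. \<exists>u v. endsS f = {u,v}"
  proof
    fix f assume "f \<in> D"
    then obtain u v where "ends f = {u,v}" using ends_uv DE by blast
    then have "endsS f = {sig f u, sig f v}" unfolding endsS_def by auto
    then show "\<exists>u v. endsS f = {u,v}" by blast
  qed
  have QS: "\<forall>f h. RK f h \<longrightarrow> (\<exists>x. x \<in> endsS f \<and> x \<in> endsS h)"
  proof (intro allI impI)
    fix f h assume "RK f h"
    then obtain x where x: "x \<in> ends f" "x \<in> ends h" "\<not> essv x" using RK_shared by blast
    then have "sig f x = (x, None)" "sig h x = (x, None)" by (auto simp: sig_def)
    then show "\<exists>x. x \<in> endsS f \<and> x \<in> endsS h" using x unfolding endsS_def by (metis image_eqI)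
  qed
  have SD: "\<forall>f. RK\<^sup>*\<^sup>* e f \<longrightarrow> f \<in> D" by (simp add: D_def Dset_def)
  have aS: "sig e a \<in> endsS e" using ab by (simp add: endsS_def)
  have conn: "\<forall>w\<in>W. reach D endsS (sig e a) w"
  proof
    fix w assume "w \<in> W"
    then obtain f where f: "f \<in> D" "w \<in> endsS f" unfolding W_def by blast
    have "RK\<^sup>*\<^sup>* e f" using f(1) by (simp add: D_def Dset_def)
    then show "reach D endsS (sig e a) w" using conn_closure[OF SD QS uvS aS] f(2) by blast
  qed
  have subW: "\<forall>f\<in>D. endsS f \<subseteq> W \<and> (\<exists>u v. endsS f = {u,v})" using uvS W_def by blast
  have rW: "sig e a \<in> W" using aS eD W_def by blast
  have cc: "card W \<le> card D + 1" using conn_card[OF finD finW subW rW conn] by simp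
  have hs: "(\<Sum>w\<in>W. degree D endsS w) = 2 * card D" using handshake[OF finD finW subW] .
  have d1: "degree D endsS (i1 x) = 2" if x: "x \<in> Ins" for x
  proof -
    have xx: "x \<in> Vert (Dset e)" "\<not> essv x" using x by (auto simp: Ins_def D_def)
    have s1: "{f\<in>D. i1 x \<in> endsS f} = {f\<in>D. x \<in> ends f}"
      using xx(2) by (auto simp: i1_def endsS_def sig_def image_iff)
    have s2: "{f\<in>D. endsS f = {i1 x}} = {f\<in>D. ends f = {x}}"
    proof (intro Collect_cong conj_cong refl)
      fix f assume "f \<in> D"
      then obtain u v where uv: "ends f = {u,v}" using ends_uv DE by blast
      have "endsS f = {sig f u, sig f v}" using uv by (simp add: endsS_def)
      then show "(endsS f = {i1 x}) = (ends f = {x})" using uv xx(2)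
        by (auto simp: i1_def sig_None doubleton_eq_iff)
    qed
    have "degree D endsS (i1 x) = degree D ends x" unfolding degree_def s1 s2 ..
    then show ?thesis using internal_deg[OF e xx] D_def by simp
  qed
  have d2: "degree D endsS (i2 p) = 1" if p: "p \<in> CI" for p
  proof -
    obtain v f where vf: "p = (v,f)" "f \<in> D" "v \<in> ends f" "essv v" using p CI_def by blast
    have s1: "{f'\<in>D. i2 p \<in> endsS f'} = {f}"
      using vf by (auto simp: i2_def endsS_def sig_Some' image_iff)
    have s2: "{f'\<in>D. endsS f' = {i2 p}} = {}"
    proof (rule ccontr)
      assume "{f'\<in>D. endsS f' = {i2 p}} \<noteq> {}"
      then obtain f' where f': "f' \<in> D" "endsS f' = {i2 p}" by blast
      then have "\<forall>y\<in>ends f'. sig f' y = (v, Some f)" using vf by (auto simp: endsS_def i2_def)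
      then have yv: "\<forall>y\<in>ends f'. y = v \<and> f' = f" by (simp add: sig_Some)
      have "ends f' \<noteq> {}" using f' by (auto simp: endsS_def)
      then have "ends f' = {v}" "f' = f" using yv by auto
      then show False using nl f'(1) vf(4) D_def by blast
    qed
    show ?thesis unfolding degree_def s1 s2 by simp
  qed
  have "(\<Sum>w\<in>W. degree D endsS w) = (\<Sum>w\<in>i1 ` Ins. degree D endsS w) + (\<Sum>w\<in>i2 ` CI. degree D endsS w)"
    using W_eq sum.union_disjoint[OF _ _ disj] finInt finCI by simp
  also have "\<dots> = (\<Sum>x\<in>Ins. degree D endsS (i1 x)) + (\<Sum>p\<in>CI. degree D endsS (i2 p))"
    by (simp only: sum.reindex[OF inj1] sum.reindex[OF inj2] comp_def)
  also have "\<dots> = (\<Sum>x\<in>Ins. 2) + (\<Sum>p\<in>CI. 1)" using d1 d2 by simp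
  finally have h1: "2 * card D = 2 * card Ins + card CI" using hs by simp
  have c2: "card CI \<le> 2" using h1 cc cardW by linarith
  have "even (2 * card Ins + card CI)" using h1 by (metis dvd_triv_left)
  then have "even (card CI)" by simp
  with c2 show ?thesis unfolding CI_def D_def by simp
qed

end


context mg begin

abbreviation ibm :: "'e set \<Rightarrow> ('v, 'e) bmg" where "ibm C \<equiv> induced_bmg E ends C"

lemma ibm_simps: "bverts (ibm C) = Vert C" "bedges (ibm C) = C"
  "bdry (ibm C) = {v \<in> Vert C. \<exists>g\<in>E - C. v \<in> ends g}"
  by (simp_all add: induced_bmg_def bverts_def bedges_def bdry_def Vert_def)

lemma cls_conn: assumes e0: "e0 \<in> E" shows "connected_mg (Vert (cls e0)) (cls e0) ends"
proof -
  let ?C = "cls e0"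
  obtain a b where ab: "ends e0 = {a,b}" using ends_uv e0 by blast
  have aS: "a \<in> ends e0" using ab by simp
  have SD: "\<forall>f. R\<^sup>*\<^sup>* e0 f \<longrightarrow> f \<in> ?C" by (simp add: cls_def)
  have QS: "\<forall>f h. R f h \<longrightarrow> (\<exists>x. x \<in> ends f \<and> x \<in> ends h)" unfolding R_def by blast
  have uv: "\<forall>f\<in>?C. \<exists>u v. ends f = {u,v}" using cls_sub[OF e0] ends_uv by blast
  have r: "reach ?C ends a y" if yy: "y \<in> Vert ?C" for y
  proof -
    obtain f where f: "f \<in> ?C" "y \<in> ends f" using yy unfolding Vert_def by blast
    have rr: "R\<^sup>*\<^sup>* e0 f" using f(1) cls_def by simp
    show ?thesis by (rule conn_closure[OF SD QS uv aS rr f(2)])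
  qed
  have "a \<in> Vert ?C" using aS cls_self unfolding Vert_def by blast
  moreover have "reach ?C ends x y" if "x \<in> Vert ?C" "y \<in> Vert ?C" for x y
  proof -
    have "reach ?C ends x a" using r[OF that(1)] by (rule reach_sym)
    then show ?thesis using r[OF that(2)] by (rule reach_trans)
  qed
  ultimately show ?thesis unfolding connected_mg_def by blast
qed

lemma D_conn: assumes e: "ess e" and a: "a \<in> ends e" shows "\<forall>y\<in>Vert (Dset e). reach (Dset e) ends a y"
proof
  fix y assume "y \<in> Vert (Dset e)"
  then obtain f where f: "f \<in> Dset e" "y \<in> ends f" unfolding Vert_def by blast
  have SD: "\<forall>f. RK\<^sup>*\<^sup>* e f \<longrightarrow> f \<in> Dset e" by (simp add: Dset_def)
  have QS: "\<forall>f h. RK f h \<longrightarrow> (\<exists>x. x \<in> ends f \<and> x \<in> ends h)" using RK_shared by blast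
  have uv: "\<forall>f\<in>Dset e. \<exists>u v. ends f = {u,v}" using D_sub_E[OF e] ends_uv by blast
  have rr: "RK\<^sup>*\<^sup>* e f" using f(1) Dset_def by simp
  show "reach (Dset e) ends a y" by (rule conn_closure[OF SD QS uv a rr f(2)])
qed

lemma cycle_in_cls_ess: "e0 \<in> E \<Longrightarrow> is_cycle (cls e0) ends es vs \<Longrightarrow> f \<in> set es \<Longrightarrow> ess f"
  using cycle_ess cls_sub by blast

lemma cyc_eq_D:
  assumes e: "ess e" and c: "is_cycle (cls e) ends es vs"
  shows "set es = Dset e"
proof
  have eE: "e \<in> E" using ess_E[OF e] .
  have sub: "set es \<subseteq> cls e" using cycle_sub[OF c] .
  show sD: "set es \<subseteq> Dset e" using sub cycle_in_cls_ess[OF eE c] D_eq[OF e] by blast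
  have ne: "es \<noteq> []" using c is_cycle_def by blast
  define z where "z = es ! 0"
  have z: "z \<in> set es" using ne z_def by simp
  have zD: "z \<in> Dset e" using z sD by blast
  have finD: "finite (Dset e)" using D_sub_E[OF e] finE finite_subset by blast
  show "Dset e \<subseteq> set es"
  proof
    fix f assume "f \<in> Dset e"
    then have "f \<in> Dset z" using D_same[OF zD] by simp
    then have "RK\<^sup>*\<^sup>* z f" by (simp add: Dset_def)
    then show "f \<in> set es"
    proof (induction rule: rtranclp_induct)
      case base then show ?case using z .
    next
      case (step f h)
      obtain x where x: "x \<in> ends f" "x \<in> ends h" "\<not> essv x" using RK_shared[OF step(2)] by blast
      have xv: "x \<in> set vs" using cycle_ends_in[OF c step(3)] x(1) by blast
      have d1: "degree (set es) ends x \<ge> 2" using cycle_deg[OF c xv] .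
      have xVD: "x \<in> Vert (Dset e)" using step(3) sD x(1) unfolding Vert_def by blast
      have d2: "degree (Dset e) ends x = 2" using internal_deg[OF e xVD x(3)] .
      have hD: "h \<in> Dset e" using D_step[OF _ step(2)] step(3) sD by blast
      show ?case
      proof (rule ccontr)
        assume nh: "h \<notin> set es"
        have "{g\<in>set es. x \<in> ends g} \<subset> {g\<in>Dset e. x \<in> ends g}" using sD nh hD x(2) by blast
        then have "card {g\<in>set es. x \<in> ends g} < card {g\<in>Dset e. x \<in> ends g}"
          using finD by (intro psubset_card_mono) auto
        moreover have "card {g\<in>set es. ends g = {x}} \<le> card {g\<in>Dset e. ends g = {x}}"
          using finD sD by (intro card_mono) auto
        ultimately have "degree (set es) ends x < degree (Dset e) ends x" unfolding degree_def by simp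
        then show False using d1 d2 by simp
      qed
    qed
  qed
qed

lemma tree_not_uni: "is_tree ends S \<Longrightarrow> \<not> is_unicyclic ends S"
  unfolding is_tree_def is_unicyclic_def acyclic_mg_def cycle_edge_sets_def by auto

lemma uni_intro:
  assumes "connected_mg (bverts S) (bedges S) ends" "\<exists>es vs. is_cycle (bedges S) ends es vs"
    "\<And>es vs. is_cycle (bedges S) ends es vs \<Longrightarrow> set es = D"
  shows "is_unicyclic ends S"
proof -
  have "cycle_edge_sets (bedges S) ends = {D}" unfolding cycle_edge_sets_def using assms(2,3) by blast
  then show ?thesis using assms(1) unfolding is_unicyclic_def by simp
qed

lemma deg_cycle_exists:
  assumes e: "ess e" and dall: "\<forall>x\<in>Vert (Dset e). degree (Dset e) ends x = 2"
  shows "\<exists>es vs. is_cycle (Dset e) ends es vs"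
proof -
  let ?D = "Dset e"
  have DE: "?D \<subseteq> E" using D_sub_E[OF e] .
  have finD: "finite ?D" using DE finE finite_subset by blast
  have finW: "finite (Vert ?D)" using Vert_sub[OF DE] finV finite_subset by blast
  have sub: "\<forall>f\<in>?D. ends f \<subseteq> Vert ?D \<and> (\<exists>u v. ends f = {u,v})" using DE ends_uv unfolding Vert_def by blast
  have hs: "(\<Sum>x\<in>Vert ?D. degree ?D ends x) = 2 * card ?D" using handshake[OF finD finW sub] .
  have "(\<Sum>x\<in>Vert ?D. degree ?D ends x) = (\<Sum>x\<in>Vert ?D. 2)" using dall by simp
  then have cc: "card (Vert ?D) \<le> card ?D" using hs by simp
  obtain a b where ab: "ends e = {a,b}" using ends_uv ess_E[OF e] by blast
  have a: "a \<in> ends e" using ab by simp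
  have aW: "a \<in> Vert ?D" using a D_self unfolding Vert_def by blast
  show ?thesis using conn_card[OF finD finW sub aW D_conn[OF e a]] cc by blast
qed

end


context mg begin

definition cv :: "'e set \<Rightarrow> 'v \<Rightarrow> nat" where
  "cv C v = card {f\<in>C. ess f \<and> v \<in> ends f} + card {f\<in>C. ess f \<and> ends f = {v}}"

lemma finC: "e0 \<in> E \<Longrightarrow> finite (cls e0)" using cls_sub finE finite_subset by blast

lemma class_P:
  assumes e0: "e0 \<in> E" and ne: "\<forall>f\<in>cls e0. \<not> ess f"
  shows "bdry (ibm (cls e0)) = {v\<in>Vert (cls e0). essv v} \<and> is_tree ends (ibm (cls e0))
    \<and> card (bdry (ibm (cls e0))) \<le> 1 \<and> (\<forall>v. cv (cls e0) v = 0)"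
proof -
  let ?C = "cls e0"
  have bd: "bdry (ibm ?C) = {v\<in>Vert ?C. essv v}"
  proof
    show "bdry (ibm ?C) \<subseteq> {v\<in>Vert ?C. essv v}" using bdry_essv[OF e0] by (auto simp: ibm_simps)
    show "{v\<in>Vert ?C. essv v} \<subseteq> bdry (ibm ?C)"
    proof
      fix v assume v: "v \<in> {v\<in>Vert ?C. essv v}"
      then obtain h where h: "h \<in> E" "ess h" "v \<in> ends h" using essv_kv kv_def by blast
      then have "h \<notin> ?C" using ne by blast
      then show "v \<in> bdry (ibm ?C)" using v h by (auto simp: ibm_simps)
    qed
  qed
  have conn: "connected_mg (Vert ?C) ?C ends" using cls_conn[OF e0] .
  have acyc: "acyclic_mg ?C ends"
    unfolding acyclic_mg_def
  proof
    assume "\<exists>es vs. is_cycle ?C ends es vs"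
    then obtain es vs where c: "is_cycle ?C ends es vs" by blast
    then have "es \<noteq> []" by (simp add: is_cycle_def)
    then have "es!0 \<in> set es" by simp
    then have "ess (es!0)" "es!0 \<in> ?C" using cycle_in_cls_ess[OF e0 c] cycle_sub[OF c] by auto
    then show False using ne by blast
  qed
  have tree: "is_tree ends (ibm ?C)" using conn acyc by (simp add: is_tree_def ibm_simps)
  have CN: "?C \<subseteq> NE" using ne cls_sub[OF e0] by blast
  have one: "\<forall>a1\<in>bdry (ibm ?C). \<forall>a2\<in>bdry (ibm ?C). a1 = a2"
  proof (intro ballI)
    fix a1 a2 assume a: "a1 \<in> bdry (ibm ?C)" "a2 \<in> bdry (ibm ?C)"
    then have av: "a1 \<in> Vert ?C" "a2 \<in> Vert ?C" "essv a1" "essv a2" using bd by auto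
    have "reach ?C ends a1 a2" using conn av unfolding connected_mg_def by blast
    then have "reach NE ends a1 a2" using CN by (rule reach_mono)
    then show "a1 = a2" using kv_eq essv_kv av by blast
  qed
  have "bdry (ibm ?C) \<subseteq> V" using Vert_sub[OF cls_sub[OF e0]] bd by auto
  then have finB: "finite (bdry (ibm ?C))" using finV by (rule finite_subset)
  have c1: "card (bdry (ibm ?C)) \<le> 1" using card_le_Suc0_iff_eq[OF finB] one by simp
  have "cv ?C v = 0" for v
  proof -
    have e1: "{f\<in>?C. ess f \<and> v \<in> ends f} = {}" and e2: "{f\<in>?C. ess f \<and> ends f = {v}} = {}" using ne by auto
    show ?thesis by (simp only: cv_def e1 e2 card.empty add_0)
  qed
  then show ?thesis using bd tree c1 by blast
qed

lemma class_L:
  assumes e: "ess e" and f: "f \<in> Dset e" "ends f = {w}" "essv w"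
  shows "bdry (ibm (cls e)) = {v\<in>Vert (cls e). essv v} \<and> bdry (ibm (cls e)) = {w}
    \<and> is_unicyclic ends (ibm (cls e)) \<and> degree (cls e) ends w = 2
    \<and> (\<exists>es vs. is_cycle (cls e) ends es vs \<and> w \<in> set vs)
    \<and> (\<forall>v. cv (cls e) v = (if v = w then 2 else 0))"
proof -
  have eE: "e \<in> E" using ess_E[OF e] .
  have ef: "ess f" using D_ess[OF e f(1)] .
  have fE: "f \<in> E" using ess_E[OF ef] .
  have fC: "f \<in> cls e" using D_sub_cls f(1) by blast
  have "cls f \<subseteq> {f}"
  proof (rule cls_closure)
    fix f' h assume a: "f' \<in> {f}" "R f' h"
    then obtain x where x: "x \<in> ends f" "\<not> crit x f" using R_def by blast
    then have "x = w" using f by simp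
    then have "crit x f" using crit_iff f ef by simp
    then show "h \<in> {f}" using x by simp
  qed simp
  then have Ceq: "cls e = {f}" using cls_eq[OF fC] fC by blast
  have VC: "Vert (cls e) = {w}" using Ceq f by (simp add: Vert_def)
  obtain g where g: "g \<in> E" "ess g" "w \<in> ends g" "g \<noteq> f"
  proof (rule ccontr)
    assume "\<not> thesis"
    then have s1: "{g\<in>E. ess g \<and> w \<in> ends g} \<subseteq> {f}" using that by blast
    then have s2: "{g\<in>E. ess g \<and> ends g = {w}} \<subseteq> {f}" by auto
    have "card {g\<in>E. ess g \<and> w \<in> ends g} \<le> 1" using card_mono[OF _ s1] by simp
    moreover have "card {g\<in>E. ess g \<and> ends g = {w}} \<le> 1" using card_mono[OF _ s2] by simp
    ultimately have "dg w \<le> 2" unfolding dg_def by simp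
    then show False using f(3) essv_iff by simp
  qed
  have bd: "bdry (ibm (cls e)) = {w}" using g Ceq VC by (auto simp: ibm_simps)
  have bd2: "{v\<in>Vert (cls e). essv v} = {w}" using VC f by auto
  have cyc: "is_cycle {f} ends [f] [w]" using f fE by (simp add: is_cycle_def)
  have uni: "is_unicyclic ends (ibm (cls e))"
  proof (rule uni_intro)
    show "connected_mg (bverts (ibm (cls e))) (bedges (ibm (cls e))) ends" using cls_conn[OF eE] by (simp add: ibm_simps)
    show "\<exists>es vs. is_cycle (bedges (ibm (cls e))) ends es vs" using cyc Ceq by (auto simp: ibm_simps)
    fix es vs assume c: "is_cycle (bedges (ibm (cls e))) ends es vs"
    then have "set es \<subseteq> {f}" "es \<noteq> []" using cycle_sub Ceq by (auto simp: ibm_simps is_cycle_def)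
    then show "set es = {f}" by (cases es) auto
  qed
  have d1: "{g\<in>cls e. w \<in> ends g} = {f}" "{g\<in>cls e. ends g = {w}} = {f}" using Ceq f by auto
  have deg: "degree (cls e) ends w = 2" unfolding degree_def d1 by simp
  have cvv: "cv (cls e) v = (if v = w then 2 else 0)" for v
  proof (cases "v = w")
    case True
    then have d1: "{g\<in>cls e. ess g \<and> v \<in> ends g} = {f}" "{g\<in>cls e. ess g \<and> ends g = {v}} = {f}"
      using Ceq f ef by auto
    show ?thesis unfolding cv_def d1 using True by simp
  next
    case False
    then have d1: "{g\<in>cls e. ess g \<and> v \<in> ends g} = {}" "{g\<in>cls e. ess g \<and> ends g = {v}} = {}"
      using Ceq f ef by auto
    show ?thesis unfolding cv_def d1 using False by simp
  qed
  have "\<exists>es vs. is_cycle (cls e) ends es vs \<and> w \<in> set vs" using cyc Ceq by (intro exI[of _ "[f]"] exI[of _ "[w]"]) simp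
  then show ?thesis using bd bd2 uni deg cvv by auto
qed

end


context mg begin

lemma class_N:
  assumes e: "ess e" and nl: "\<forall>f\<in>Dset e. \<forall>v. ends f = {v} \<longrightarrow> \<not> essv v"
  shows "bdry (ibm (cls e)) = {v\<in>Vert (cls e). essv v} \<and>
   ((\<exists>u w. u \<noteq> w \<and> bdry (ibm (cls e)) = {u,w} \<and> is_tree ends (ibm (cls e)) \<and>
       degree (cls e) ends u = 1 \<and> degree (cls e) ends w = 1 \<and>
       (\<forall>v. essv v \<longrightarrow> cv (cls e) v = (if v = u \<or> v = w then 1 else 0)))
   \<or> (\<exists>w. bdry (ibm (cls e)) = {w} \<and> is_unicyclic ends (ibm (cls e)) \<and> degree (cls e) ends w = 2 \<and>
       (\<exists>es vs. is_cycle (cls e) ends es vs \<and> w \<in> set vs) \<and>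
       (\<forall>v. essv v \<longrightarrow> cv (cls e) v = (if v = w then 2 else 0)))
   \<or> (bdry (ibm (cls e)) = {} \<and> is_unicyclic ends (ibm (cls e)) \<and> (\<forall>v. essv v \<longrightarrow> cv (cls e) v = 0)))"
proof -
  define C where "C = cls e"
  define D where "D = Dset e"
  define CI where "CI = {(v,f). f \<in> D \<and> v \<in> ends f \<and> essv v}"
  define fib where "fib v = {f. (v,f) \<in> CI}" for v
  have eE: "e \<in> E" using ess_E[OF e] .
  have CE: "C \<subseteq> E" using cls_sub[OF eE] C_def by simp
  have finC: "finite C" using CE finE finite_subset by blast
  have DC: "D \<subseteq> C" using D_sub_cls C_def D_def by simp
  have finD: "finite D" using DC finC finite_subset by blast
  have DeqC: "{f\<in>C. ess f} = D" using D_eq[OF e] C_def D_def by simp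
  have cnt: "card CI \<le> 2 \<and> even (card CI)" using count_CI[OF e nl] CI_def D_def by simp
  have "CI \<subseteq> Vert D \<times> D" unfolding CI_def Vert_def by auto
  moreover have "finite (Vert D \<times> D)" using Vert_sub[of D] DC CE finV finD finite_subset by blast
  ultimately have finCI: "finite CI" by (rule finite_subset)
  have finfib: "finite (fib v)" for v
  proof -
    have "fib v \<subseteq> D" unfolding fib_def CI_def by auto
    then show ?thesis using finD finite_subset by blast
  qed
  have n1: "{f\<in>C. v \<in> ends f} = fib v" if v: "essv v" for v
  proof
    show "{f\<in>C. v \<in> ends f} \<subseteq> fib v"
    proof
      fix f assume f: "f \<in> {f\<in>C. v \<in> ends f}"
      then have "ess f" using cls_ess_at_essv[OF e v] C_def by blast
      then have "f \<in> D" using DeqC f by blast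
      then show "f \<in> fib v" using f v by (simp add: fib_def CI_def)
    qed
    show "fib v \<subseteq> {f\<in>C. v \<in> ends f}" using DC by (auto simp: fib_def CI_def)
  qed
  have n2: "{f\<in>C. ends f = {v}} = {}" if v: "essv v" for v
  proof -
    have "f \<notin> C" if "ends f = {v}" for f
    proof
      assume "f \<in> C"
      then have "f \<in> fib v" using n1[OF v] that by blast
      then have "f \<in> D" by (simp add: fib_def CI_def)
      then show False using nl that v D_def by blast
    qed
    then show ?thesis by blast
  qed
  have n3: "degree C ends v = card (fib v)" if v: "essv v" for v
    unfolding degree_def n1[OF v] n2[OF v] by simp
  have n4: "cv C v = card (fib v)" if v: "essv v" for v
  proof -
    have a: "{f\<in>C. ess f \<and> v \<in> ends f} = fib v"
      using n1[OF v] DeqC by (auto simp: fib_def CI_def)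
    have b: "{f\<in>C. ess f \<and> ends f = {v}} = {}" using n2[OF v] by auto
    show ?thesis unfolding cv_def a b by simp
  qed
  have n6: "card CI = (\<Sum>v\<in>fst ` CI. card (fib v))"
  proof -
    have "CI = Sigma (fst ` CI) fib" by (auto simp: fib_def image_iff) force
    moreover have "finite (fst ` CI)" using finCI by simp
    ultimately show ?thesis using card_SigmaI finfib by metis
  qed
  have n7: "{v\<in>Vert C. essv v} = fst ` CI"
  proof
    show "{v\<in>Vert C. essv v} \<subseteq> fst ` CI"
    proof
      fix v assume v: "v \<in> {v\<in>Vert C. essv v}"
      then obtain f where f: "f \<in> C" "v \<in> ends f" unfolding Vert_def by blast
      then have "f \<in> fib v" using n1 v by blast
      then show "v \<in> fst ` CI" unfolding fib_def by force
    qed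
    show "fst ` CI \<subseteq> {v\<in>Vert C. essv v}" using DC unfolding CI_def Vert_def by force
  qed
  have fibCI: "card (fib v) \<le> card CI" for v
  proof -
    have "(\<lambda>f. (v,f)) ` fib v \<subseteq> CI" by (auto simp: fib_def)
    then have "card ((\<lambda>f. (v,f)) ` fib v) \<le> card CI" using finCI by (intro card_mono)
    moreover have "card ((\<lambda>f. (v,f)) ` fib v) = card (fib v)" by (rule card_image) (auto simp: inj_on_def)
    ultimately show ?thesis by simp
  qed
  have n8: "bdry (ibm C) = fst ` CI"
  proof
    show "bdry (ibm C) \<subseteq> fst ` CI" using bdry_essv[OF eE] n7 C_def by (auto simp: ibm_simps)
    show "fst ` CI \<subseteq> bdry (ibm C)"
    proof
      fix v assume v: "v \<in> fst ` CI"
      then have vv: "v \<in> Vert C" "essv v" using n7 by auto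
      have "\<exists>g\<in>E - C. v \<in> ends g"
      proof (rule ccontr)
        assume na: "\<not> ?thesis"
        then have s1: "{g\<in>E. ess g \<and> v \<in> ends g} \<subseteq> {f\<in>C. v \<in> ends f}" by blast
        have s2: "{g\<in>E. ess g \<and> ends g = {v}} \<subseteq> {f\<in>C. ends f = {v}}" using na by auto
        have "card {g\<in>E. ess g \<and> v \<in> ends g} \<le> card (fib v)"
          using card_mono[OF _ s1] n1[OF vv(2)] finfib[of v] by simp
        moreover have "{g\<in>E. ess g \<and> ends g = {v}} = {}" using s2 n2[OF vv(2)] by blast
        then have "card {g\<in>E. ess g \<and> ends g = {v}} = 0" by (simp only: card.empty)
        ultimately have "dg v \<le> 2" unfolding dg_def using fibCI[of v] cnt by simp
        then show False using vv(2) essv_iff by simp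
      qed
      then show "v \<in> bdry (ibm C)" using vv by (simp add: ibm_simps)
    qed
  qed
  have bd0: "bdry (ibm C) = {v\<in>Vert C. essv v}" using n7 n8 by simp
  have fib_out: "fib v = {}" if "v \<notin> fst ` CI" for v using that unfolding fib_def by force
  have fib_in: "fib v \<noteq> {}" if "v \<in> fst ` CI" for v using that unfolding fib_def by force
  have conn: "connected_mg (Vert C) C ends" using cls_conn[OF eE] C_def by simp
  have cycD: "set es = D" if "is_cycle C ends es vs" for es vs using cyc_eq_D[OF e] that C_def D_def by simp
  have Dsub: "\<exists>es vs. is_cycle C ends es vs" if dd: "\<forall>x\<in>Vert D. degree D ends x = 2"
  proof -
    have "\<exists>es vs. is_cycle D ends es vs" using deg_cycle_exists[OF e] dd D_def by blast
    then obtain es vs where "is_cycle D ends es vs" by blast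
    then have "is_cycle C ends es vs" using cycle_sub DC by (metis cycle_mono subset_trans)
    then show ?thesis by blast
  qed
  have intdeg: "degree D ends x = 2" if "x \<in> Vert D" "\<not> essv x" for x
    using internal_deg[OF e] that D_def by simp
  have "card CI = 0 \<or> card CI = 2" using cnt by auto
  then have main: "(\<exists>u w. u \<noteq> w \<and> bdry (ibm C) = {u,w} \<and> is_tree ends (ibm C) \<and>
       degree C ends u = 1 \<and> degree C ends w = 1 \<and>
       (\<forall>v. essv v \<longrightarrow> cv C v = (if v = u \<or> v = w then 1 else 0)))
   \<or> (\<exists>w. bdry (ibm C) = {w} \<and> is_unicyclic ends (ibm C) \<and> degree C ends w = 2 \<and>
       (\<exists>es vs. is_cycle C ends es vs \<and> w \<in> set vs) \<and>
       (\<forall>v. essv v \<longrightarrow> cv C v = (if v = w then 2 else 0)))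
   \<or> (bdry (ibm C) = {} \<and> is_unicyclic ends (ibm C) \<and> (\<forall>v. essv v \<longrightarrow> cv C v = 0))"
  proof
    assume c0: "card CI = 0"
    then have CI0: "CI = {}" using finCI by simp
    have "\<forall>x\<in>Vert D. degree D ends x = 2"
    proof
      fix x assume x: "x \<in> Vert D"
      have "\<not> essv x"
      proof
        assume "essv x"
        then obtain f where "f \<in> D" "x \<in> ends f" using x unfolding Vert_def by blast
        then have "(x,f) \<in> CI" using \<open>essv x\<close> by (simp add: CI_def)
        then show False using CI0 by simp
      qed
      then show "degree D ends x = 2" using intdeg x by simp
    qed
    then have ex: "\<exists>es vs. is_cycle C ends es vs" by (rule Dsub)
    have uni: "is_unicyclic ends (ibm C)"
      by (rule uni_intro[where D = D]) (use conn ex cycD in \<open>auto simp: ibm_simps\<close>)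
    have "bdry (ibm C) = {}" using n8 CI0 by simp
    moreover have "cv C v = 0" if "essv v" for v using n4[OF that] fib_out CI0 by simp
    ultimately have "bdry (ibm C) = {} \<and> is_unicyclic ends (ibm C) \<and> (\<forall>v. essv v \<longrightarrow> cv C v = 0)"
      using uni by blast
    then show ?thesis by (intro disjI2)
  next
    assume c2: "card CI = 2"
    have fne: "fst ` CI \<noteq> {}" using c2 by auto
    have ffin: "finite (fst ` CI)" using finCI by simp
    have "card (fst ` CI) \<le> card CI" using finCI by (rule card_image_le)
    moreover have "card (fst ` CI) > 0" using fne ffin by (simp add: card_gt_0_iff)
    ultimately have "card (fst ` CI) = 1 \<or> card (fst ` CI) = 2" using c2 by linarith
    then show ?thesis
    proof
      assume "card (fst ` CI) = 2"
      then obtain u w where uw: "fst ` CI = {u,w}" "u \<noteq> w" by (auto simp: card_2_iff)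
      have s: "card (fib u) + card (fib w) = 2" using n6 c2 uw by simp
      have "card (fib u) > 0" "card (fib w) > 0" using fib_in uw finfib by (auto simp: card_gt_0_iff)
      then have f1: "card (fib u) = 1" "card (fib w) = 1" using s by auto
      have uv: "essv u" "essv w" using n7 uw by auto
      have du: "degree C ends u = 1" "degree C ends w = 1" using n3 uv f1 by auto
      have acyc: "acyclic_mg C ends"
        unfolding acyclic_mg_def
      proof
        assume "\<exists>es vs. is_cycle C ends es vs"
        then obtain es vs where c: "is_cycle C ends es vs" by blast
        have sD: "set es = D" using cycD[OF c] .
        obtain f where "f \<in> fib u" using fib_in uw by blast
        then have f: "f \<in> D" "u \<in> ends f" by (auto simp: fib_def CI_def)
        then have "u \<in> set vs" using cycle_ends_in[OF c] sD by blast
        then have "degree (set es) ends u \<ge> 2" using cycle_deg[OF c] by blast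
        moreover have "degree (set es) ends u \<le> degree C ends u" using sD DC finC by (intro degree_mono) auto
        ultimately show False using du by simp
      qed
      have tree: "is_tree ends (ibm C)" using conn acyc by (simp add: is_tree_def ibm_simps)
      have cvu: "\<forall>v. essv v \<longrightarrow> cv C v = (if v = u \<or> v = w then 1 else 0)"
        using n4 f1 fib_out uw by auto
      have "u \<noteq> w \<and> bdry (ibm C) = {u,w} \<and> is_tree ends (ibm C) \<and> degree C ends u = 1 \<and>
        degree C ends w = 1 \<and> (\<forall>v. essv v \<longrightarrow> cv C v = (if v = u \<or> v = w then 1 else 0))"
        using uw n8 tree du cvu by simp
      then have "\<exists>u w. u \<noteq> w \<and> bdry (ibm C) = {u,w} \<and> is_tree ends (ibm C) \<and> degree C ends u = 1 \<and>
        degree C ends w = 1 \<and> (\<forall>v. essv v \<longrightarrow> cv C v = (if v = u \<or> v = w then 1 else 0))" by blast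
      then show ?thesis by (rule disjI1)
    next
      assume "card (fst ` CI) = 1"
      then obtain w where w: "fst ` CI = {w}" by (auto simp: card_1_singleton_iff)
      have f2: "card (fib w) = 2" using n6 c2 w by simp
      have wv: "essv w" using n7 w by auto
      have dw: "degree C ends w = 2" using n3 wv f2 by simp
      have "\<forall>x\<in>Vert D. degree D ends x = 2"
      proof
        fix x assume x: "x \<in> Vert D"
        show "degree D ends x = 2"
        proof (cases "essv x")
          case False then show ?thesis using intdeg x by simp
        next
          case True
          have "x \<in> Vert C" using x DC unfolding Vert_def by blast
          then have "x = w" using n7 w True by auto
          have a: "{f\<in>D. x \<in> ends f} = {f\<in>C. x \<in> ends f}" using n1[OF True] DC by (auto simp: fib_def CI_def)
          have b: "{f\<in>D. ends f = {x}} = {f\<in>C. ends f = {x}}" using n2[OF True] DC by auto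
          have "degree D ends x = degree C ends x" unfolding degree_def a b ..
          then show ?thesis using dw \<open>x = w\<close> by simp
        qed
      qed
      then have ex: "\<exists>es vs. is_cycle C ends es vs" by (rule Dsub)
      have uni: "is_unicyclic ends (ibm C)"
        by (rule uni_intro[where D = D]) (use conn ex cycD in \<open>auto simp: ibm_simps\<close>)
      obtain es vs where c: "is_cycle C ends es vs" using ex by blast
      obtain f where "f \<in> fib w" using fib_in w by blast
      then have f: "f \<in> D" "w \<in> ends f" by (auto simp: fib_def CI_def)
      then have "w \<in> set vs" using cycle_ends_in[OF c] cycD[OF c] by blast
      then have onc: "\<exists>es vs. is_cycle C ends es vs \<and> w \<in> set vs" using c by blast
      have cvw: "\<forall>v. essv v \<longrightarrow> cv C v = (if v = w then 2 else 0)"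
        using n4 f2 fib_out w by auto
      have "bdry (ibm C) = {w} \<and> is_unicyclic ends (ibm C) \<and> degree C ends w = 2 \<and>
       (\<exists>es vs. is_cycle C ends es vs \<and> w \<in> set vs) \<and>
       (\<forall>v. essv v \<longrightarrow> cv C v = (if v = w then 2 else 0))" using w n8 uni dw onc cvw by simp
      then have "\<exists>w. bdry (ibm C) = {w} \<and> is_unicyclic ends (ibm C) \<and> degree C ends w = 2 \<and>
       (\<exists>es vs. is_cycle C ends es vs \<and> w \<in> set vs) \<and>
       (\<forall>v. essv v \<longrightarrow> cv C v = (if v = w then 2 else 0))" by blast
      then show ?thesis by (intro disjI2 disjI1)
    qed
  qed
  show ?thesis using bd0 main unfolding C_def by simp
qed

end


context mg begin

definition qedge :: "('v,'e) bmg \<Rightarrow> bool" where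
  "qedge S \<longleftrightarrow> (is_fern ends S \<and> is_tree ends S \<and> card (bdry S) = 2) \<or>
                (is_fern ends S \<and> is_unicyclic ends S \<and> card (bdry S) = 1)"

definition qcontr :: "('v,'e) bmg \<Rightarrow> 'v \<Rightarrow> nat" where
  "qcontr S v = (if qedge S then (if v \<in> bdry S then 1 else 0) + (if bdry S = {v} then 1 else 0) else 0)"

lemma class_summary:
  assumes e0: "e0 \<in> E"
  shows "bdry (ibm (cls e0)) = {v\<in>Vert (cls e0). essv v} \<and> is_fern ends (ibm (cls e0)) \<and>
         (\<forall>v. essv v \<longrightarrow> qcontr (ibm (cls e0)) v = cv (cls e0) v)"
proof (cases "\<forall>f\<in>cls e0. \<not> ess f")
  case True
  let ?S = "ibm (cls e0)"
  have P: "bdry ?S = {v\<in>Vert (cls e0). essv v}" "is_tree ends ?S" "card (bdry ?S) \<le> 1" "\<forall>v. cv (cls e0) v = 0"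
    using class_P[OF e0 True] by auto
  have fern: "is_fern ends ?S" using P(2,3) unfolding is_fern_def by auto
  have "\<not> qedge ?S" using P(2,3) tree_not_uni unfolding qedge_def by auto
  then have "qcontr ?S v = 0" for v by (simp add: qcontr_def)
  then show ?thesis using P fern by simp
next
  case False
  then obtain e where e: "e \<in> cls e0" "ess e" by blast
  have ceq: "cls e0 = cls e" using cls_eq[OF e(1)] by simp
  let ?S = "ibm (cls e)"
  have bS: "bedges ?S = cls e" by (simp add: ibm_simps)
  have ucase: "bdry ?S = {v\<in>Vert (cls e). essv v} \<and> is_fern ends ?S \<and> (\<forall>v. essv v \<longrightarrow> qcontr ?S v = cv (cls e) v)"
    if u: "bdry ?S = {v\<in>Vert (cls e). essv v}" "bdry ?S = {w}" "is_unicyclic ends ?S" "degree (cls e) ends w = 2"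
       "\<exists>es vs. is_cycle (cls e) ends es vs \<and> w \<in> set vs" "\<forall>v. essv v \<longrightarrow> cv (cls e) v = (if v = w then 2 else 0)"
    for w
  proof -
    have fern: "is_fern ends ?S" unfolding is_fern_def u(2) bS using u(3-5) by auto
    have q: "qedge ?S" using fern u(2,3) unfolding qedge_def by simp
    have "qcontr ?S v = cv (cls e) v" if "essv v" for v using q u(2,6) that by (simp add: qcontr_def)
    then show ?thesis using u fern by blast
  qed
  show ?thesis
  proof (cases "\<exists>f\<in>Dset e. \<exists>w. ends f = {w} \<and> essv w")
    case True
    then obtain f w where f: "f \<in> Dset e" "ends f = {w}" "essv w" by blast
    note L = class_L[OF e(2) f]
    have "bdry ?S = {v\<in>Vert (cls e). essv v} \<and> is_fern ends ?S \<and> (\<forall>v. essv v \<longrightarrow> qcontr ?S v = cv (cls e) v)"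
      by (rule ucase[of w]) (use L in auto)
    then show ?thesis using ceq by simp
  next
    case False
    then have nl: "\<forall>f\<in>Dset e. \<forall>v. ends f = {v} \<longrightarrow> \<not> essv v" by blast
    note N = class_N[OF e(2) nl]
    have bd: "bdry ?S = {v\<in>Vert (cls e). essv v}" using conjunct1[OF N] .
    note N2 = conjunct2[OF N]
    have "bdry ?S = {v\<in>Vert (cls e). essv v} \<and> is_fern ends ?S \<and> (\<forall>v. essv v \<longrightarrow> qcontr ?S v = cv (cls e) v)"
    proof -
      consider (two) u w where "u \<noteq> w" "bdry ?S = {u,w}" "is_tree ends ?S"
         "degree (cls e) ends u = 1" "degree (cls e) ends w = 1"
         "\<forall>v. essv v \<longrightarrow> cv (cls e) v = (if v = u \<or> v = w then 1 else 0)"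
      | (one) w where "bdry ?S = {w}" "is_unicyclic ends ?S" "degree (cls e) ends w = 2"
         "\<exists>es vs. is_cycle (cls e) ends es vs \<and> w \<in> set vs" "\<forall>v. essv v \<longrightarrow> cv (cls e) v = (if v = w then 2 else 0)"
      | (zero) "bdry ?S = {}" "is_unicyclic ends ?S" "\<forall>v. essv v \<longrightarrow> cv (cls e) v = 0"
        using N2 by (elim disjE exE conjE) fast+
      then show ?thesis
      proof cases
        case two
        have c2: "card (bdry ?S) = 2" using two by simp
        have fern: "is_fern ends ?S" unfolding is_fern_def two(2) bS using two(1,3,4,5) by auto
        have q: "qedge ?S" using fern two(3) c2 unfolding qedge_def by simp
        have "qcontr ?S v = cv (cls e) v" if "essv v" for v using q two(1,2,6) that by (auto simp: qcontr_def)
        then show ?thesis using bd fern by blast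
      next
        case one
        show ?thesis by (rule ucase[of w]) (use one bd in auto)
      next
        case zero
        have fern: "is_fern ends ?S" unfolding is_fern_def zero(1) using zero(2) by auto
        have "\<not> qedge ?S" unfolding qedge_def zero(1) by simp
        then have "qcontr ?S v = cv (cls e) v" if "essv v" for v using zero(3) that by (simp add: qcontr_def)
        then show ?thesis using bd fern by blast
      qed
    qed
    then show ?thesis using ceq by simp
  qed
qed

definition Sing :: "('v,'e) bmg set" where
  "Sing = {({v}, {}, {}) | v. v \<in> V \<and> (\<forall>e\<in>E. v \<notin> ends e)}"

lemma HF_eq: "induced_partition V E ends (sim_classes V E ends) = ibm ` cls ` E \<union> Sing"
  unfolding induced_partition_def sim_classes_eq Sing_def by simp

lemma Sing_simps: "S \<in> Sing \<Longrightarrow> bdry S = {} \<and> bedges S = {} \<and> (\<exists>v. bverts S = {v} \<and> v \<in> V \<and> (\<forall>e\<in>E. v \<notin> ends e))"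
  unfolding Sing_def by (auto simp: bdry_def bedges_def bverts_def)

lemma Sing_fern: "S \<in> Sing \<Longrightarrow> is_fern ends S"
proof -
  assume S: "S \<in> Sing"
  then obtain v where v: "bverts S = {v}" "bedges S = {}" "bdry S = {}" using Sing_simps[OF S] by blast
  have "connected_mg (bverts S) (bedges S) ends" using v by (simp add: connected_mg_def)
  moreover have "acyclic_mg (bedges S) ends" using v by (auto simp: acyclic_mg_def is_cycle_def)
  ultimately show ?thesis using v by (simp add: is_fern_def is_tree_def)
qed

lemma part1: "\<forall>S\<in>induced_partition V E ends (sim_classes V E ends). is_fern ends S"
  unfolding HF_eq using class_summary Sing_fern by blast

lemma nonessv_unique_cls:
  assumes "x \<in> Vert (cls e1)" "x \<in> Vert (cls e2)" "\<not> essv x" "e1 \<in> E" "e2 \<in> E"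
  shows "cls e1 = cls e2"
proof -
  obtain f1 where f1: "f1 \<in> cls e1" "x \<in> ends f1" using assms(1) unfolding Vert_def by blast
  obtain f2 where f2: "f2 \<in> cls e2" "x \<in> ends f2" using assms(2) unfolding Vert_def by blast
  have "f1 \<in> E" "f2 \<in> E" using f1 f2 cls_sub assms by blast+
  then have "R f1 f2" using R_nonessv f1 f2 assms(3) by blast
  then have "f2 \<in> cls e1" using cls_R f1 by blast
  then show ?thesis using cls_disj f2(1) by blast
qed

lemma part2: "\<forall>v\<in>V. \<not> essv v \<longrightarrow> (\<exists>!S. S \<in> induced_partition V E ends (sim_classes V E ends) \<and> v \<in> bverts S)"
proof (intro ballI impI)
  fix v assume v: "v \<in> V" "\<not> essv v"
  show "\<exists>!S. S \<in> induced_partition V E ends (sim_classes V E ends) \<and> v \<in> bverts S"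
    unfolding HF_eq
  proof (cases "\<exists>e\<in>E. v \<in> ends e")
    case True
    then obtain e where e: "e \<in> E" "v \<in> ends e" by blast
    have vin: "v \<in> Vert (cls e)" using e cls_self unfolding Vert_def by blast
    show "\<exists>!S. S \<in> ibm ` cls ` E \<union> Sing \<and> v \<in> bverts S"
    proof (rule ex1I[of _ "ibm (cls e)"])
      show "ibm (cls e) \<in> ibm ` cls ` E \<union> Sing \<and> v \<in> bverts (ibm (cls e))" using e vin by (simp add: ibm_simps)
      fix S assume S: "S \<in> ibm ` cls ` E \<union> Sing \<and> v \<in> bverts S"
      show "S = ibm (cls e)"
      proof (cases "S \<in> Sing")
        case True
        then obtain u where "bverts S = {u}" "\<forall>e\<in>E. u \<notin> ends e" using Sing_simps[OF True] by blast
        then show ?thesis using S e by auto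
      next
        case False
        then obtain e' where e': "e' \<in> E" "S = ibm (cls e')" using S by blast
        then have "v \<in> Vert (cls e')" using S by (simp add: ibm_simps)
        then have "cls e' = cls e" using nonessv_unique_cls vin v(2) e' e by blast
        then show ?thesis using e' by simp
      qed
    qed
  next
    case False
    let ?S0 = "({v}, {}, {}) :: ('v,'e) bmg"
    have S0: "?S0 \<in> Sing" using v False unfolding Sing_def by blast
    show "\<exists>!S. S \<in> ibm ` cls ` E \<union> Sing \<and> v \<in> bverts S"
    proof (rule ex1I[of _ ?S0])
      show "?S0 \<in> ibm ` cls ` E \<union> Sing \<and> v \<in> bverts ?S0" using S0 by (simp add: bverts_def)
      fix S assume S: "S \<in> ibm ` cls ` E \<union> Sing \<and> v \<in> bverts S"
      show "S = ?S0"
      proof (cases "S \<in> Sing")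
        case True
        then show ?thesis using S unfolding Sing_def by (auto simp: bverts_def)
      next
        case F2: False
        then obtain e' where e': "e' \<in> E" "S = ibm (cls e')" using S by blast
        then have "v \<in> Vert (cls e')" using S by (simp add: ibm_simps)
        then obtain f where "f \<in> cls e'" "v \<in> ends f" unfolding Vert_def by blast
        then show ?thesis using False cls_sub[OF e'(1)] by blast
      qed
    qed
  qed
qed

lemma part3: "\<Union>(bdry ` induced_partition V E ends (sim_classes V E ends)) = {v\<in>V. essv v}"
  unfolding HF_eq
proof
  show "\<Union>(bdry ` (ibm ` cls ` E \<union> Sing)) \<subseteq> {v\<in>V. essv v}"
  proof
    fix v assume "v \<in> \<Union>(bdry ` (ibm ` cls ` E \<union> Sing))"
    then obtain S where S: "S \<in> ibm ` cls ` E \<union> Sing" "v \<in> bdry S" by blast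
    show "v \<in> {v\<in>V. essv v}"
    proof (cases "S \<in> Sing")
      case True then show ?thesis using S Sing_simps[OF True] by blast
    next
      case False
      then obtain e where e: "e \<in> E" "S = ibm (cls e)" using S by blast
      then have "v \<in> Vert (cls e)" "essv v" using S class_summary[OF e(1)] by auto
      then show ?thesis using essv_iff by blast
    qed
  qed
  show "{v\<in>V. essv v} \<subseteq> \<Union>(bdry ` (ibm ` cls ` E \<union> Sing))"
  proof
    fix v assume v: "v \<in> {v\<in>V. essv v}"
    then obtain h where h: "h \<in> E" "v \<in> ends h" using essv_kv kv_def by blast
    then have "v \<in> Vert (cls h)" using cls_self unfolding Vert_def by blast
    then have "v \<in> bdry (ibm (cls h))" using class_summary[OF h(1)] v by auto
    then show "v \<in> \<Union>(bdry ` (ibm ` cls ` E \<union> Sing))" using h by blast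
  qed
qed

end


context mg begin

lemma QE_eq: "quot_edges ends (induced_partition V E ends (sim_classes V E ends)) = {S\<in>ibm ` cls ` E. qedge S}"
proof -
  have "S \<notin> Sing" if "qedge S" for S
  proof
    assume "S \<in> Sing"
    then have "bdry S = {}" using Sing_simps by blast
    then show False using that unfolding qedge_def by simp
  qed
  then show ?thesis unfolding quot_edges_def HF_eq qedge_def[symmetric] by blast
qed

lemma QV_eq: "quot_verts (induced_partition V E ends (sim_classes V E ends)) = {v\<in>V. essv v}"
  unfolding quot_verts_def using part3 .

lemma finCls: "finite (cls ` E)" using finE by simp

lemma cls_partition_card:
  "(\<Sum>C\<in>cls ` E. card {f\<in>C. P f}) = card {f\<in>E. P f}"
proof -
  have U: "{f\<in>E. P f} = (\<Union>C\<in>cls ` E. {f\<in>C. P f})"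
  proof
    show "{f\<in>E. P f} \<subseteq> (\<Union>C\<in>cls ` E. {f\<in>C. P f})" using cls_self by blast
    show "(\<Union>C\<in>cls ` E. {f\<in>C. P f}) \<subseteq> {f\<in>E. P f}" using cls_sub by blast
  qed
  have fin: "\<forall>C\<in>cls ` E. finite {f\<in>C. P f}" using finC by auto
  have disj: "\<forall>C\<in>cls ` E. \<forall>C'\<in>cls ` E. C \<noteq> C' \<longrightarrow> {f\<in>C. P f} \<inter> {f\<in>C'. P f} = {}"
    using cls_disj by blast
  show ?thesis unfolding U using card_UN_disjoint[OF finCls fin disj] by simp
qed

lemma part5: "\<forall>v\<in>quot_verts (induced_partition V E ends (sim_classes V E ends)).
     degree (quot_edges ends (induced_partition V E ends (sim_classes V E ends))) bdry v \<ge> 3"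
proof
  fix v assume "v \<in> quot_verts (induced_partition V E ends (sim_classes V E ends))"
  then have v: "v \<in> V" "essv v" using QV_eq by auto
  let ?Cls = "cls ` E"
  have finI: "finite (ibm ` ?Cls)" using finCls by simp
  have inj: "inj_on ibm ?Cls" by (rule inj_onI) (metis ibm_simps(2))
  have "degree {S\<in>ibm ` ?Cls. qedge S} bdry v =
     (\<Sum>S\<in>{S\<in>ibm ` ?Cls. qedge S}. (if v \<in> bdry S then 1 else 0) + (if bdry S = {v} then 1 else 0))"
    using finI by (simp add: degree_sum)
  also have "\<dots> = (\<Sum>S\<in>ibm ` ?Cls. qcontr S v)"
    using finI by (simp add: sum.inter_filter qcontr_def)
  also have "\<dots> = (\<Sum>C\<in>?Cls. qcontr (ibm C) v)" using sum.reindex[OF inj] by simp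
  also have "\<dots> = (\<Sum>C\<in>?Cls. cv C v)" using class_summary v(2) by (intro sum.cong) auto
  also have "\<dots> = (\<Sum>C\<in>?Cls. card {f\<in>C. ess f \<and> v \<in> ends f}) + (\<Sum>C\<in>?Cls. card {f\<in>C. ess f \<and> ends f = {v}})"
    unfolding cv_def by (simp add: sum.distrib)
  also have "\<dots> = dg v" unfolding dg_def cls_partition_card ..
  finally have "degree {S\<in>ibm ` ?Cls. qedge S} bdry v = dg v" .
  then show "degree (quot_edges ends (induced_partition V E ends (sim_classes V E ends))) bdry v \<ge> 3"
    using QE_eq v essv_iff by simp
qed


lemma bdry_sub_Vert: "bdry (ibm C) \<subseteq> Vert C" by (auto simp: ibm_simps)

lemma QE_key:
  assumes S: "S \<in> {S\<in>ibm ` cls ` E. qedge S}" and X0: "X0 \<subseteq> V"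
    and disj: "bdry S \<inter> ((\<lambda>x. if essv x then x else (SOME b. essv b \<and> (\<exists>e\<in>E. x \<in> Vert (cls e) \<and> b \<in> Vert (cls e)))) ` X0 \<inter> {v\<in>V. essv v}) = {}"
  shows "\<exists>e0\<in>E. S = ibm (cls e0) \<and> Vert (cls e0) \<inter> X0 = {}"
proof -
  define fsel where "fsel = (\<lambda>x. if essv x then x else (SOME b. essv b \<and> (\<exists>e\<in>E. x \<in> Vert (cls e) \<and> b \<in> Vert (cls e))))"
  have disj': "bdry S \<inter> (fsel ` X0 \<inter> {v\<in>V. essv v}) = {}" using disj fsel_def by simp
  obtain e0 where e0: "e0 \<in> E" "S = ibm (cls e0)" "qedge S" using S by blast
  have bd: "bdry S = {v\<in>Vert (cls e0). essv v}" using class_summary[OF e0(1)] e0 by simp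
  have VV: "Vert (cls e0) \<subseteq> V" using Vert_sub cls_sub[OF e0(1)] by blast
  have "Vert (cls e0) \<inter> X0 = {}"
  proof (rule ccontr)
    assume "Vert (cls e0) \<inter> X0 \<noteq> {}"
    then obtain x where x: "x \<in> Vert (cls e0)" "x \<in> X0" by blast
    show False
    proof (cases "essv x")
      case True
      then have xb: "x \<in> bdry S" "fsel x = x" "x \<in> V" using bd x VV by (auto simp: fsel_def)
      have "x \<in> fsel ` X0" using x(2) xb(2) by (metis image_eqI)
      then have "x \<in> bdry S \<inter> (fsel ` X0 \<inter> {v\<in>V. essv v})" using xb True by simp
      then show False using disj' by simp
    next
      case False
      have "bdry S \<noteq> {}" using e0(3) unfolding qedge_def by auto
      then obtain b where b: "b \<in> bdry S" by blast
      then have b': "essv b" "b \<in> Vert (cls e0)" using bd by auto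
      have ex: "\<exists>b. essv b \<and> (\<exists>e\<in>E. x \<in> Vert (cls e) \<and> b \<in> Vert (cls e))" using b' x e0(1) by blast
      have fx: "fsel x = (SOME b. essv b \<and> (\<exists>e\<in>E. x \<in> Vert (cls e) \<and> b \<in> Vert (cls e)))" using False fsel_def by simp
      have "essv (fsel x) \<and> (\<exists>e\<in>E. x \<in> Vert (cls e) \<and> fsel x \<in> Vert (cls e))"
        unfolding fx by (rule someI_ex[OF ex])
      then obtain e' where e': "e' \<in> E" "x \<in> Vert (cls e')" "fsel x \<in> Vert (cls e')" "essv (fsel x)" by blast
      have "cls e' = cls e0" using nonessv_unique_cls[OF e'(2) x(1) False e'(1) e0(1)] .
      then have fb: "fsel x \<in> bdry S" "fsel x \<in> V" using e' bd VV by auto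
      have "fsel x \<in> fsel ` X0" using x(2) by simp
      then have "fsel x \<in> bdry S \<inter> (fsel ` X0 \<inter> {v\<in>V. essv v})" using fb e'(4) by simp
      then show False using disj' by simp
    qed
  qed
  then show ?thesis using e0 by blast
qed

end

lemma fvn_le:
  assumes "finite W" "X \<subseteq> W" "acyclic_mg {e\<in>F. en e \<inter> X = {}} en"
  shows "fvn W F en \<le> card X"
  unfolding fvn_def
proof (rule Min_le)
  have "{X. X \<subseteq> W \<and> acyclic_mg {e\<in>F. en e \<inter> X = {}} en} \<subseteq> Pow W" by auto
  then have "finite {X. X \<subseteq> W \<and> acyclic_mg {e\<in>F. en e \<inter> X = {}} en}" using assms(1) finite_subset by blast
  then show "finite (card ` {X. X \<subseteq> W \<and> acyclic_mg {e\<in>F. en e \<inter> X = {}} en})" by simp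
  show "card X \<in> card ` {X. X \<subseteq> W \<and> acyclic_mg {e\<in>F. en e \<inter> X = {}} en}" using assms by blast
qed

context mg begin

lemma fvn_attained: "\<exists>X0. X0 \<subseteq> V \<and> acyclic_mg {e\<in>E. ends e \<inter> X0 = {}} ends \<and> card X0 = fvn V E ends"
proof -
  let ?P = "{X. X \<subseteq> V \<and> acyclic_mg {e\<in>E. ends e \<inter> X = {}} ends}"
  have E0: "{e\<in>E. ends e \<inter> V = {}} = {}"
  proof -
    have "ends e \<inter> V \<noteq> {}" if eE: "e \<in> E" for e
    proof -
      obtain u v where "ends e = {u,v}" using ends_uv eE by blast
      then show ?thesis using ends_sub[OF eE] by auto
    qed
    then show ?thesis by blast
  qed
  have "acyclic_mg {e\<in>E. ends e \<inter> V = {}} ends" unfolding E0 by (auto simp: acyclic_mg_def is_cycle_def)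
  then have "V \<in> ?P" by simp
  moreover have "?P \<subseteq> Pow V" by auto
  then have "finite ?P" using finV finite_subset by blast
  ultimately have "Min (card ` ?P) \<in> card ` ?P" by (intro Min_in) auto
  then show ?thesis unfolding fvn_def by auto
qed

end


context mg begin

lemma quot_cycle_lift:
  assumes X0: "acyclic_mg {e\<in>E. ends e \<inter> X0 = {}} ends"
    and c: "is_cycle QF bdry Ss us"
    and QF: "\<forall>S\<in>QF. \<exists>e0\<in>E. S = ibm (cls e0) \<and> Vert (cls e0) \<inter> X0 = {} \<and> qedge S"
  shows False
proof -
  define F where "F = {e\<in>E. ends e \<inter> X0 = {}}"
  define k where "k = length Ss"
  have k: "k > 0" "length us = k" "distinct Ss" "distinct us" "set Ss \<subseteq> QF"
    "\<And>i. i < k \<Longrightarrow> bdry (Ss!i) = {us!i, us!((i+1) mod k)}"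
    using c unfolding is_cycle_def k_def by auto
  have Sinfo: "\<exists>e0\<in>E. Ss!i = ibm (cls e0) \<and> Vert (cls e0) \<inter> X0 = {} \<and> qedge (Ss!i)" if "i < k" for i
  proof -
    have "Ss!i \<in> QF" using k(5) that k_def by (metis nth_mem subsetD)
    then show ?thesis using QF by blast
  qed
  have CF: "bedges (Ss!i) \<subseteq> F" if i: "i < k" for i
  proof -
    obtain e0 where e0: "e0 \<in> E" "Ss!i = ibm (cls e0)" "Vert (cls e0) \<inter> X0 = {}" using Sinfo[OF i] by blast
    show ?thesis
    proof
      fix f assume "f \<in> bedges (Ss!i)"
      then have f: "f \<in> cls e0" using e0 by (simp add: ibm_simps)
      then have "f \<in> E" using cls_sub[OF e0(1)] by blast
      moreover have "ends f \<subseteq> Vert (cls e0)" using f unfolding Vert_def by blast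
      ultimately show "f \<in> F" using e0(3) F_def by blast
    qed
  qed
  have bv: "bdry (Ss!i) \<subseteq> bverts (Ss!i)" if i: "i < k" for i
    using Sinfo[OF i] bdry_sub_Vert by (auto simp: ibm_simps)
  have nocyc: "\<not> (\<exists>es vs. is_cycle F ends es vs)" using X0 unfolding acyclic_mg_def F_def .
  show False
  proof (cases "k = 1")
    case True
    then have b0: "bdry (Ss!0) = {us!0}" using k(6)[of 0] by simp
    obtain e0 where e0: "e0 \<in> E" "Ss!0 = ibm (cls e0)" "qedge (Ss!0)" using Sinfo[of 0] True by auto
    then have "is_unicyclic ends (Ss!0)" using b0 unfolding qedge_def by auto
    then have "card (cycle_edge_sets (bedges (Ss!0)) ends) = 1" by (simp add: is_unicyclic_def)
    then have "cycle_edge_sets (bedges (Ss!0)) ends \<noteq> {}" by auto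
    then obtain es vs where cy: "is_cycle (bedges (Ss!0)) ends es vs" unfolding cycle_edge_sets_def by blast
    have "bedges (Ss!0) \<subseteq> F" using CF[of 0] k(1) by blast
    then have "set es \<subseteq> F" using cycle_sub[OF cy] by (rule subset_trans[rotated])
    then have "is_cycle F ends es vs" by (rule cycle_mono[OF cy])
    then show False using nocyc by blast
  next
    case False
    then have k2: "k \<ge> 2" using k(1) by simp
    have ne: "us!i \<noteq> us!((i+1) mod k)" if i: "i < k" for i
    proof -
      have "(i+1) mod k \<noteq> i"
      proof (cases "i + 1 < k")
        case True then show ?thesis by simp
      next
        case False then have "i + 1 = k" using i by simp
        then show ?thesis using k2 by simp
      qed
      moreover have "(i+1) mod k < k" using k(1) by simp
      ultimately show ?thesis using k(2,4) i by (simp add: nth_eq_iff_index_eq)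
    qed
    have tf: "is_tree ends (Ss!i) \<and> is_fern ends (Ss!i) \<and> card (bdry (Ss!i)) = 2" if i: "i < k" for i
    proof -
      have c2: "card (bdry (Ss!i)) = 2" using k(6)[OF i] ne[OF i] by simp
      have "qedge (Ss!i)" using Sinfo[OF i] by blast
      then show ?thesis using c2 unfolding qedge_def by auto
    qed
    have rch: "reach (bedges (Ss!i)) ends (us!i) (us!((i+1) mod k))" if i: "i < k" for i
    proof -
      have "connected_mg (bverts (Ss!i)) (bedges (Ss!i)) ends" using tf[OF i] is_tree_def by blast
      moreover have "us!i \<in> bverts (Ss!i)" "us!((i+1) mod k) \<in> bverts (Ss!i)" using bv[OF i] k(6)[OF i] by auto
      ultimately show ?thesis unfolding connected_mg_def by blast
    qed
    define C0 where "C0 = bedges (Ss!0)"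
    define u0 where "u0 = us!0"
    define u1 where "u1 = us!1"
    have k0: "0 < k" using k(1) .
    have b01: "bdry (Ss!0) = {u0, u1}" using k(6)[OF k0] k2 u0_def u1_def by simp
    have u01: "u0 \<noteq> u1" using ne[OF k0] k2 u0_def u1_def by simp
    have deg1: "degree C0 ends u0 = 1" using tf[OF k0] b01 unfolding is_fern_def C0_def by auto
    obtain e00 where e00: "e00 \<in> E" "Ss!0 = ibm (cls e00)" using Sinfo[OF k0] by blast
    have C0cls: "C0 = cls e00" using e00 C0_def by (simp add: ibm_simps)
    have finC0: "finite C0" using C0cls finC[OF e00(1)] by simp
    have u0V: "u0 \<in> Vert C0" using bv[OF k0] b01 C0cls e00 by (auto simp: ibm_simps)
    then obtain g where g: "g \<in> C0" "u0 \<in> ends g" unfolding Vert_def by blast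
    have d: "card {f\<in>C0. u0 \<in> ends f} + card {f\<in>C0. ends f = {u0}} = 1" using deg1 degree_def by metis
    have "g \<in> {f\<in>C0. u0 \<in> ends f}" using g by simp
    then have "card {f\<in>C0. u0 \<in> ends f} > 0" using finC0 by (subst card_gt_0_iff) auto
    then have "card {f\<in>C0. u0 \<in> ends f} \<ge> 1" by simp
    then have c1: "card {f\<in>C0. u0 \<in> ends f} \<le> Suc 0" "card {f\<in>C0. ends f = {u0}} = 0" using d by auto
    have only: "\<forall>f\<in>C0. u0 \<in> ends f \<longrightarrow> f = g"
    proof (intro ballI impI)
      fix f assume "f \<in> C0" "u0 \<in> ends f"
      then have "f \<in> {f\<in>C0. u0 \<in> ends f}" "g \<in> {f\<in>C0. u0 \<in> ends f}" using g by auto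
      then show "f = g" using c1(1) card_le_Suc0_iff_eq[of "{f\<in>C0. u0 \<in> ends f}"] finC0 by auto
    qed
    have nl: "ends g \<noteq> {u0}"
    proof
      assume "ends g = {u0}"
      then have "g \<in> {f\<in>C0. ends f = {u0}}" using g by simp
      then have "card {f\<in>C0. ends f = {u0}} > 0" using finC0 by (auto simp: card_gt_0_iff)
      then show False using c1(2) by simp
    qed
    have gE: "g \<in> E" using g C0cls cls_sub[OF e00(1)] by blast
    obtain a b where ab: "ends g = {a,b}" using ends_uv[OF gE] by blast
    define y where "y = (if a = u0 then b else a)"
    have gy: "ends g = {u0, y}" using ab g(2) y_def by auto
    have yu: "y \<noteq> u0" using gy nl by auto
    have yV: "y \<in> Vert C0" using gy g(1) unfolding Vert_def by blast
    have u1V: "u1 \<in> Vert C0" using bv[OF k0] b01 C0cls e00 by (auto simp: ibm_simps)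
    have connC0: "connected_mg (Vert C0) C0 ends" using tf[OF k0] C0cls e00 by (simp add: is_tree_def ibm_simps)
    have "reach C0 ends y u1" using connC0 yV u1V unfolding connected_mg_def by blast
    then have "reach (C0 - {g}) ends y u1" using reach_leaf[of C0 ends y u1 u0 g y] yu u01 only gy by auto
    moreover have "C0 - {g} \<subseteq> F - {g}" using CF[OF k0] C0_def by auto
    ultimately have r1: "reach (F - {g}) ends y u1" by (rule reach_mono)
    have step: "reach (F - {g}) ends (us!i) (us!((i+1) mod k))" if i: "0 < i" "i < k" for i
    proof -
      obtain ei where ei: "ei \<in> E" "Ss!i = ibm (cls ei)" using Sinfo[OF i(2)] by blast
      have "Ss \<noteq> []" using i k_def by auto
      then have "Ss!i \<noteq> Ss!0" using nth_eq_iff_index_eq[OF k(3), of i 0] i k_def by simp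
      then have "cls ei \<noteq> cls e00" using ei e00 by auto
      then have "g \<notin> cls ei" using cls_disj g C0cls by blast
      then have "bedges (Ss!i) \<subseteq> F - {g}" using CF[OF i(2)] ei by (auto simp: ibm_simps)
      then show ?thesis by (rule reach_mono[OF rch[OF i(2)]])
    qed
    have chain: "1 \<le> j \<longrightarrow> j < k \<longrightarrow> reach (F - {g}) ends u1 (us!j)" for j
    proof (induction j)
      case 0 then show ?case by simp
    next
      case (Suc j)
      show ?case
      proof (intro impI)
        assume a: "1 \<le> Suc j" "Suc j < k"
        show "reach (F - {g}) ends u1 (us!Suc j)"
        proof (cases "j = 0")
          case True then show ?thesis using u1_def by simp
        next
          case False
          then have r: "reach (F - {g}) ends u1 (us!j)" using Suc.IH a by simp
          have "reach (F - {g}) ends (us!j) (us!((j+1) mod k))" using step[of j] False a by simp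
          then have "reach (F - {g}) ends (us!j) (us!Suc j)" using a by simp
          with r show ?thesis by (rule reach_trans)
        qed
      qed
    qed
    have "reach (F - {g}) ends u1 (us!(k-1))" using chain[of "k-1"] k2 by simp
    moreover have "reach (F - {g}) ends (us!(k-1)) (us!(((k-1)+1) mod k))" using step[of "k-1"] k2 by simp
    moreover have "((k-1)+1) mod k = 0" using k2 by simp
    ultimately have "reach (F - {g}) ends u1 u0" using u0_def by (metis reach_trans)
    with r1 have "reach (F - {g}) ends y u0" by (rule reach_trans)
    then have "reach (F - {g}) ends u0 y" by (rule reach_sym)
    moreover have "g \<in> F" using CF[OF k0] g C0_def by blast
    ultimately have "\<exists>es vs. is_cycle F ends es vs \<and> g \<in> set es" using reach_cycle[of g F ends u0 y] gy by blast
    then show False using nocyc by blast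
  qed
qed

lemma part4: "fvn (quot_verts (induced_partition V E ends (sim_classes V E ends)))
      (quot_edges ends (induced_partition V E ends (sim_classes V E ends))) bdry \<le> fvn V E ends"
proof -
  obtain X0 where X0: "X0 \<subseteq> V" "acyclic_mg {e\<in>E. ends e \<inter> X0 = {}} ends" "card X0 = fvn V E ends"
    using fvn_attained by blast
  define fsel where "fsel = (\<lambda>x. if essv x then x else (SOME b. essv b \<and> (\<exists>e\<in>E. x \<in> Vert (cls e) \<and> b \<in> Vert (cls e))))"
  define X' where "X' = fsel ` X0 \<inter> {v\<in>V. essv v}"
  let ?QE = "{S\<in>ibm ` cls ` E. qedge S}"
  let ?QF = "{S\<in>?QE. bdry S \<inter> X' = {}}"
  have QF: "\<forall>S\<in>?QF. \<exists>e0\<in>E. S = ibm (cls e0) \<and> Vert (cls e0) \<inter> X0 = {} \<and> qedge S"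
  proof
    fix S assume S: "S \<in> ?QF"
    then have "\<exists>e0\<in>E. S = ibm (cls e0) \<and> Vert (cls e0) \<inter> X0 = {}"
      using QE_key[of S X0] X0(1) unfolding X'_def fsel_def by blast
    then show "\<exists>e0\<in>E. S = ibm (cls e0) \<and> Vert (cls e0) \<inter> X0 = {} \<and> qedge S" using S by blast
  qed
  have acyc: "acyclic_mg ?QF bdry"
    unfolding acyclic_mg_def
  proof
    assume "\<exists>Ss us. is_cycle ?QF bdry Ss us"
    then obtain Ss us where c: "is_cycle ?QF bdry Ss us" by blast
    show False using quot_cycle_lift[OF X0(2) c QF] .
  qed
  have finQ: "finite {v\<in>V. essv v}" using finV by simp
  have "fvn {v\<in>V. essv v} ?QE bdry \<le> card X'"
    using fvn_le[OF finQ _ acyc] X'_def by blast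
  also have "card X' \<le> card (fsel ` X0)" unfolding X'_def
    using X0(1) finV by (intro card_mono) (auto intro: finite_subset)
  also have "\<dots> \<le> card X0" using X0(1) finV by (intro card_image_le) (auto intro: finite_subset)
  finally show ?thesis using X0(3) QV_eq QE_eq by simp
qed

end

theorem lemma5p4:
  fixes V :: "'v set" and E :: "'e set" and ends :: "'e \<Rightarrow> 'v set"
  assumes "multigraph V E ends"
  defines "HF \<equiv> induced_partition V E ends (sim_classes V E ends)"
  shows "(\<forall>S\<in>HF. is_fern ends S)
    \<and> (\<forall>v\<in>V. \<not> essential_vertex V E ends v \<longrightarrow> (\<exists>!S. S \<in> HF \<and> v \<in> bverts S))
    \<and> \<Union>(bdry ` HF) = {v\<in>V. essential_vertex V E ends v}
    \<and> fvn (quot_verts HF) (quot_edges ends HF) bdry \<le> fvn V E ends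
    \<and> (\<forall>v\<in>quot_verts HF. degree (quot_edges ends HF) bdry v \<ge> 3)"
proof -
  interpret mg V E ends using assms(1) by (rule mg.intro)
  show ?thesis unfolding HF_def using part1 part2 part3 part4 part5 by blast
qed

end
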